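(* Let $X=\{x_1,\dots,x_n\}$ be a finite biquandle and $K$ a virtual knotoid diagram. For all $i,j\in\{1,\dots,n\}$, the number $\Phi_{X_{ij}}^{\mathbb{Z}}(K)$ of $X_{ij}$-colorings of $K$ is an invariant of virtual knotoids: if $K'$ is related to $K$ by a finite sequence of extended Reidemeister moves and isotopies of $S^2$, then $\Phi_{X_{ij}}^{\mathbb{Z}}(K)=\Phi_{X_{ij}}^{\mathbb{Z}}(K')$.
   Context: A virtual knotoid diagram is an immersed oriented open curve in $S^2$ (oriented from its endpoint called the tail to its endpoint called the head) with finitely many transversal double points, each of which is either a classical crossing (with over/under information) or a virtual crossing. Extended Reidemeister moves are the classical Reidemeister moves I, II, III, the virtual Reidemeister moves I, II, III (all crossings virtual) and the mixed (detour) move, all performed away from the endpoints (moving a strand adjacent to an endpoint over or under another strand is forbidden). A virtual knotoid is an equivalence class of diagrams under these moves and isotopy of $S^2$. A biquandle is a set $X$ with binary operations $\underline{\triangleright},\overline{\triangleright}$ such that for all $x,y,z$: $x\underline{\triangleright}x=x\overline{\triangleright}x$; the maps $x\mapsto x\overline{\triangleright}y$, $x\mapsto x\underline{\triangleright}y$ and $(x,y)\mapsto(y\overline{\triangleright}x,\,x\underline{\triangleright}y)$ are invertible; and $(x\underline{\triangleright}y)\underline{\triangleright}(z\underline{\triangleright}y)=(x\underline{\triangleright}z)\underline{\triangleright}(y\overline{\triangleright}z)$, $(x\underline{\triangleright}y)\overline{\triangleright}(z\underline{\triangleright}y)=(x\overline{\triangleright}z)\underline{\triangleright}(y\overline{\triangleright}z)$,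 $(x\overline{\triangleright}y)\overline{\triangleright}(z\overline{\triangleright}y)=(x\overline{\triangleright}z)\overline{\triangleright}(y\underline{\triangleright}z)$. Semi-arcs are the pieces into which crossings cut the curve; the tail (head) semi-arc is the one containing the tail (head). An $X$-coloring of $K$ assigns an element of $X$ to each semi-arc such that at each classical crossing, drawn with both strands oriented upward, incoming lower-left and lower-right colors $x,y$ give outgoing upper-left and upper-right colors $y\overline{\triangleright}x$ and $x\underline{\triangleright}y$, and at each virtual crossing colors pass through unchanged. An $X_{ij}$-coloring is an $X$-coloring in which the tail semi-arc is colored $x_i$ and the head semi-arc is colored $x_j$; $\Phi_{X_{ij}}^{\mathbb{Z}}(K)$ denotes their number.
   Formalization: At each classical crossing, both strands upward, the left colours x (under strand) and y (over strand) give right colours $x\underline{\triangleright}y$ and $y\overline{\triangleright}x$ respectively, in place of the lower-to-upper rule. The paper assumes this as well. *)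

theory Defs
  imports Main
begin

definition biquandle :: "'a set \<Rightarrow> ('a \<Rightarrow> 'a \<Rightarrow> 'a) \<Rightarrow> ('a \<Rightarrow> 'a \<Rightarrow> 'a) \<Rightarrow> bool" where
  "biquandle X ul ol \<longleftrightarrow>
     (\<forall>x\<in>X. \<forall>y\<in>X. ul x y \<in> X \<and> ol x y \<in> X) \<and>
     (\<forall>x\<in>X. ul x x = ol x x) \<and>
     (\<forall>y\<in>X. bij_betw (\<lambda>x. ol x y) X X) \<and>
     (\<forall>y\<in>X. bij_betw (\<lambda>x. ul x y) X X) \<and>
     bij_betw (\<lambda>(x, y). (ol y x, ul x y)) (X \<times> X) (X \<times> X) \<and>
     (\<forall>x\<in>X. \<forall>y\<in>X. \<forall>z\<in>X.
        ul (ul x y) (ul z y) = ul (ul x z) (ol y z) \<and>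
        ol (ul x y) (ul z y) = ul (ol x z) (ol y z) \<and>
        ol (ol x y) (ol z y) = ol (ol x z) (ul y z))"

text \<open>A letter (l, ov, pos) records a passage of the curve through the classical
  crossing labelled l; ov = True iff the passage is the over-passage; pos = True iff
  the crossing is positive. Virtual crossings are not recorded (colours pass
  through them unchanged). A diagram with m letters has semi-arcs 0..m; semi-arc 0
  is the tail semi-arc, semi-arc m the head semi-arc, and letter k lies between
  semi-arcs k and k+1.\<close>

type_synonym letter = "nat \<times> bool \<times> bool"

definition labels :: "letter list \<Rightarrow> nat set" where
  "labels w = fst ` set w"

definition gauss_diagram :: "letter list \<Rightarrow> bool" where
  "gauss_diagram w \<longleftrightarrow>
     (\<forall>l\<in>labels w. \<exists>p q s. p < length w \<and> q < length w \<and>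
        w ! p = (l, True, s) \<and> w ! q = (l, False, s) \<and>
        (\<forall>i<length w. fst (w ! i) = l \<longrightarrow> i = p \<or> i = q))"

text \<open>Colouring rule at a classical crossing (drawn with both strands upward):
  if uL, uR (oL, oR) are the colours of the under (over) strand on the left and
  right side of the crossing, then uR = uL ul oL and oR = oL ol uL.
  At a positive crossing the over strand runs from the left to the right side and
  the under strand from the right to the left side; at a negative crossing the
  other way round.\<close>

definition crossing_ok ::
  "('a \<Rightarrow> 'a \<Rightarrow> 'a) \<Rightarrow> ('a \<Rightarrow> 'a \<Rightarrow> 'a) \<Rightarrow> bool \<Rightarrow> 'a \<Rightarrow> 'a \<Rightarrow> 'a \<Rightarrow> 'a \<Rightarrow> bool" where
  "crossing_ok ul ol pos o_in o_out u_in u_out \<longleftrightarrow>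
     (if pos then u_in = ul u_out o_in \<and> o_out = ol o_in u_out
      else u_out = ul u_in o_out \<and> o_in = ol o_out u_in)"

definition is_coloring ::
  "'a set \<Rightarrow> ('a \<Rightarrow> 'a \<Rightarrow> 'a) \<Rightarrow> ('a \<Rightarrow> 'a \<Rightarrow> 'a) \<Rightarrow> letter list \<Rightarrow> 'a list \<Rightarrow> bool" where
  "is_coloring X ul ol w cs \<longleftrightarrow>
     length cs = Suc (length w) \<and> set cs \<subseteq> X \<and>
     (\<forall>p<length w. \<forall>q<length w. \<forall>l s.
        w ! p = (l, True, s) \<and> w ! q = (l, False, s) \<longrightarrow>
        crossing_ok ul ol s (cs ! p) (cs ! Suc p) (cs ! q) (cs ! Suc q))"

definition Phi ::
  "'a set \<Rightarrow> ('a \<Rightarrow> 'a \<Rightarrow> 'a) \<Rightarrow> ('a \<Rightarrow> 'a \<Rightarrow> 'a) \<Rightarrow> 'a \<Rightarrow> 'a \<Rightarrow> letter list \<Rightarrow> nat" where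
  "Phi X ul ol xi xj w =
     card {cs. is_coloring X ul ol w cs \<and> cs ! 0 = xi \<and> cs ! length w = xj}"

text \<open>Virtual Reidemeister moves, detour moves and isotopies of S^2 do not change
  the Gauss code (up to renaming labels). The classical moves (away from the
  endpoints) act as follows.\<close>

definition r1_move :: "letter list \<Rightarrow> letter list \<Rightarrow> bool" where
  "r1_move w w' \<longleftrightarrow>
     (\<exists>u v l ov s. w = u @ [(l, ov, s), (l, \<not> ov, s)] @ v \<and> w' = u @ v \<and>
        l \<notin> labels (u @ v))"

definition r2_move :: "letter list \<Rightarrow> letter list \<Rightarrow> bool" where
  "r2_move w w' \<longleftrightarrow>
     (\<exists>u1 u2 u3 a b s rev ovfirst.
        a \<noteq> b \<and> a \<notin> labels (u1 @ u2 @ u3) \<and> b \<notin> labels (u1 @ u2 @ u3) \<and>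
        (let OP = [(a, True, s), (b, True, \<not> s)];
             UP = (if rev then [(b, False, \<not> s), (a, False, s)]
                   else [(a, False, s), (b, False, \<not> s)])
         in w = u1 @ (if ovfirst then OP else UP) @ u2 @ (if ovfirst then UP else OP) @ u3) \<and>
        w' = u1 @ u2 @ u3)"

text \<open>Third move: three strands T (top), M (middle), B (bottom); crossing a is
  T over M, b is T over B, c is M over B. The flags oT, oM, oB give the order in
  which each strand meets its two crossings; the move reverses all three orders.
  The sign/order condition is exactly the one realised by three oriented
  strands bounding a small triangle in the plane.\<close>

definition r3_pieces ::
  "nat \<Rightarrow> nat \<Rightarrow> nat \<Rightarrow> bool \<Rightarrow> bool \<Rightarrow> bool \<Rightarrow> bool \<Rightarrow> bool \<Rightarrow> bool \<Rightarrow> letter list list" where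
  "r3_pieces a b c sa sb sc oT oM oB =
     [ (if oT then [(a, True, sa), (b, True, sb)] else [(b, True, sb), (a, True, sa)]),
       (if oM then [(a, False, sa), (c, True, sc)] else [(c, True, sc), (a, False, sa)]),
       (if oB then [(b, False, sb), (c, False, sc)] else [(c, False, sc), (b, False, sb)]) ]"

definition r3_move :: "letter list \<Rightarrow> letter list \<Rightarrow> bool" where
  "r3_move w w' \<longleftrightarrow>
     (\<exists>u0 u1 u2 u3 a b c sa sb sc oT oM oB i j k.
        distinct [a, b, c] \<and> {a, b, c} \<inter> labels (u0 @ u1 @ u2 @ u3) = {} \<and>
        ((oM = oT) \<longleftrightarrow> (sb = sc)) \<and> ((oB = oT) \<longleftrightarrow> (sa = sc)) \<and>
        distinct [i, j, k] \<and> i < 3 \<and> j < 3 \<and> k < 3 \<and>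
        (let P = r3_pieces a b c sa sb sc oT oM oB;
             Q = r3_pieces a b c sa sb sc (\<not> oT) (\<not> oM) (\<not> oB)
         in w = u0 @ P ! i @ u1 @ P ! j @ u2 @ P ! k @ u3 \<and>
            w' = u0 @ Q ! i @ u1 @ Q ! j @ u2 @ Q ! k @ u3))"

definition relabel_move :: "letter list \<Rightarrow> letter list \<Rightarrow> bool" where
  "relabel_move w w' \<longleftrightarrow>
     (\<exists>f. inj_on f (labels w) \<and> w' = map (\<lambda>(l, ov, s). (f l, ov, s)) w)"

definition knotoid_step :: "letter list \<Rightarrow> letter list \<Rightarrow> bool" where
  "knotoid_step w w' \<longleftrightarrow> gauss_diagram w \<and> gauss_diagram w' \<and>
     (r1_move w w' \<or> r1_move w' w \<or> r2_move w w' \<or> r2_move w' w \<or>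
      r3_move w w' \<or> r3_move w' w \<or> relabel_move w w' \<or> relabel_move w' w)"

definition knotoid_equiv :: "letter list \<Rightarrow> letter list \<Rightarrow> bool" where
  "knotoid_equiv = knotoid_step\<^sup>*\<^sup>*"

end

theory Submission
  imports Defs
begin

locale bq =
  fixes X :: "'a set" and ul ol :: "'a \<Rightarrow> 'a \<Rightarrow> 'a"
  assumes B: "biquandle X ul ol" and fin: "finite X"
begin

lemma Bd: "(\<forall>x\<in>X. \<forall>y\<in>X. ul x y \<in> X \<and> ol x y \<in> X)"
     "(\<forall>x\<in>X. ul x x = ol x x)"
     "(\<forall>y\<in>X. bij_betw (\<lambda>x. ol x y) X X)"
     "(\<forall>y\<in>X. bij_betw (\<lambda>x. ul x y) X X)"
     "bij_betw (\<lambda>(x, y). (ol y x, ul x y)) (X \<times> X) (X \<times> X)"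
     "(\<forall>x\<in>X. \<forall>y\<in>X. \<forall>z\<in>X.
        ul (ul x y) (ul z y) = ul (ul x z) (ol y z) \<and>
        ol (ul x y) (ul z y) = ul (ol x z) (ol y z) \<and>
        ol (ol x y) (ol z y) = ol (ol x z) (ul y z))"
  using B unfolding biquandle_def by blast+

lemma cl_ul[simp, intro]: "x \<in> X \<Longrightarrow> y \<in> X \<Longrightarrow> ul x y \<in> X"
  using Bd(1) by simp
lemma cl_ol[simp, intro]: "x \<in> X \<Longrightarrow> y \<in> X \<Longrightarrow> ol x y \<in> X"
  using Bd(1) by simp
lemma idem: "x \<in> X \<Longrightarrow> ul x x = ol x x"
  using Bd(2) by simp
lemma L1: "x \<in> X \<Longrightarrow> y \<in> X \<Longrightarrow> z \<in> X \<Longrightarrow> ul (ul x y) (ul z y) = ul (ul x z) (ol y z)"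
  using Bd(6) by simp
lemma L2: "x \<in> X \<Longrightarrow> y \<in> X \<Longrightarrow> z \<in> X \<Longrightarrow> ol (ul x y) (ul z y) = ul (ol x z) (ol y z)"
  using Bd(6) by simp
lemma L3: "x \<in> X \<Longrightarrow> y \<in> X \<Longrightarrow> z \<in> X \<Longrightarrow> ol (ol x y) (ol z y) = ol (ol x z) (ul y z)"
  using Bd(6) by simp

lemma bij_ul: "y \<in> X \<Longrightarrow> bij_betw (\<lambda>x. ul x y) X X"
  using Bd(4) by simp
lemma bij_ol: "y \<in> X \<Longrightarrow> bij_betw (\<lambda>x. ol x y) X X"
  using Bd(3) by simp
lemma bij_S: "bij_betw (\<lambda>(x, y). (ol y x, ul x y)) (X \<times> X) (X \<times> X)"
  using Bd(5) by simp

lemma inj_ul: "x \<in> X \<Longrightarrow> x' \<in> X \<Longrightarrow> y \<in> X \<Longrightarrow> ul x y = ul x' y \<Longrightarrow> x = x'"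
  using bij_ul[of y] unfolding bij_betw_def inj_on_def by blast
lemma inj_ol: "x \<in> X \<Longrightarrow> x' \<in> X \<Longrightarrow> y \<in> X \<Longrightarrow> ol x y = ol x' y \<Longrightarrow> x = x'"
  using bij_ol[of y] unfolding bij_betw_def inj_on_def by blast
lemma sur_ul: "y \<in> X \<Longrightarrow> z \<in> X \<Longrightarrow> \<exists>x\<in>X. ul x y = z"
proof -
  assume "y \<in> X" "z \<in> X"
  then have "z \<in> (\<lambda>x. ul x y) ` X" using bij_ul[of y] by (simp add: bij_betw_def)
  then show ?thesis by (auto simp: image_iff)
qed
lemma sur_ol: "y \<in> X \<Longrightarrow> z \<in> X \<Longrightarrow> \<exists>x\<in>X. ol x y = z"
proof -
  assume "y \<in> X" "z \<in> X"
  then have "z \<in> (\<lambda>x. ol x y) ` X" using bij_ol[of y] by (simp add: bij_betw_def)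
  then show ?thesis by (auto simp: image_iff)
qed
lemma inj_S: "x \<in> X \<Longrightarrow> y \<in> X \<Longrightarrow> x' \<in> X \<Longrightarrow> y' \<in> X \<Longrightarrow> ol y x = ol y' x' \<Longrightarrow> ul x y = ul x' y' \<Longrightarrow> x = x' \<and> y = y'"
proof -
  assume a: "x \<in> X" "y \<in> X" "x' \<in> X" "y' \<in> X" "ol y x = ol y' x'" "ul x y = ul x' y'"
  have "inj_on (\<lambda>(x, y). (ol y x, ul x y)) (X \<times> X)" using bij_S by (simp add: bij_betw_def)
  from inj_onD[OF this, of "(x, y)" "(x', y')"] a show ?thesis by simp
qed
lemma sur_S: "a \<in> X \<Longrightarrow> b \<in> X \<Longrightarrow> \<exists>x\<in>X. \<exists>y\<in>X. ol y x = a \<and> ul x y = b"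
proof -
  assume "a \<in> X" "b \<in> X"
  then have "(a, b) \<in> (\<lambda>(x, y). (ol y x, ul x y)) ` (X \<times> X)" using bij_S unfolding bij_betw_def by simp
  then obtain p where p: "p \<in> X \<times> X" "(a, b) = (\<lambda>(x, y). (ol y x, ul x y)) p" by (rule imageE)
  obtain x y where "p = (x, y)" by (cases p)
  with p show ?thesis by auto
qed
end

fun dec :: "letter list \<Rightarrow> 'a \<Rightarrow> 'a list \<Rightarrow> (letter \<times> 'a \<times> 'a) list" where
  "dec (x # xs) c (d # ds) = (x, c, d) # dec xs d ds"
| "dec _ _ _ = []"

definition CC :: "('a \<Rightarrow> 'a \<Rightarrow> 'a) \<Rightarrow> ('a \<Rightarrow> 'a \<Rightarrow> 'a) \<Rightarrow> (letter \<times> 'a \<times> 'a) set \<Rightarrow> bool" where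
  "CC ul ol S \<longleftrightarrow> (\<forall>l s a b c d. ((l, True, s), a, b) \<in> S \<longrightarrow> ((l, False, s), c, d) \<in> S \<longrightarrow> crossing_ok ul ol s a b c d)"

lemma mem_dec:
  "length os = length w \<Longrightarrow> z \<in> set (dec w c os) \<longleftrightarrow> (\<exists>k<length w. z = (w ! k, (c # os) ! k, os ! k))"
proof (induction w arbitrary: c os)
  case Nil
  then show ?case by simp
next
  case (Cons x xs)
  then obtain d ds where os: "os = d # ds" by (cases os) auto
  with Cons have len: "length ds = length xs" by simp
  show ?case
    unfolding os using Cons.IH[OF len, of d]
    by (auto simp: less_Suc_eq_0_disj)
qed

lemma length_dec: "length os = length w \<Longrightarrow> length (dec w c os) = length w"
  by (induction w arbitrary: c os) (auto simp: length_Suc_conv)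

lemma dec_append:
  "length o1 = length x \<Longrightarrow> dec (x @ y) c (o1 @ p) = dec x c o1 @ dec y (last (c # o1)) p"
proof (induction x arbitrary: c o1)
  case Nil
  then show ?case by simp
next
  case (Cons a x)
  then obtain d ds where "o1 = d # ds" by (cases o1) auto
  with Cons show ?case by simp
qed

lemma last_cons_append: "last (c # a @ b) = last (last (c # a) # b)"
  by (induction a arbitrary: c) auto

lemma nth_length_last: "(c # os) ! length os = last (c # os)"
  by (simp add: last_conv_nth)

lemma lab_dec: "z \<in> set (dec w c os) \<Longrightarrow> fst z \<in> set w"
  by (induction w c os rule: dec.induct) auto

lemma CC_union:
  assumes "\<forall>z\<in>S. \<forall>z'\<in>T. fst (fst z) \<noteq> fst (fst z')"
  shows "CC ul ol (S \<union> T) \<longleftrightarrow> CC ul ol S \<and> CC ul ol T"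
  using assms unfolding CC_def by (auto; fastforce)

lemma CC_mono: "CC ul ol S \<Longrightarrow> T \<subseteq> S \<Longrightarrow> CC ul ol T"
  unfolding CC_def by blast

context bq begin

lemma is_coloring_dec:
  assumes "length os = length w"
  shows "is_coloring X ul ol w (c # os) \<longleftrightarrow> c \<in> X \<and> set os \<subseteq> X \<and> CC ul ol (set (dec w c os))"
proof -
  have "CC ul ol (set (dec w c os)) \<longleftrightarrow>
     (\<forall>p<length w. \<forall>q<length w. \<forall>l s. w ! p = (l, True, s) \<and> w ! q = (l, False, s) \<longrightarrow>
        crossing_ok ul ol s ((c # os) ! p) ((c # os) ! Suc p) ((c # os) ! q) ((c # os) ! Suc q))"
    unfolding CC_def mem_dec[OF assms] by (auto; metis)
  then show ?thesis unfolding is_coloring_def using assms by auto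
qed

definition Col :: "'a \<Rightarrow> 'a \<Rightarrow> letter list \<Rightarrow> 'a list set" where
  "Col xi xj w = {os. length os = length w \<and> set os \<subseteq> X \<and> CC ul ol (set (dec w xi os)) \<and> last (xi # os) = xj}"

lemma Phi_Col:
  assumes "xi \<in> X"
  shows "Phi X ul ol xi xj w = card (Col xi xj w)"
proof -
  have "{cs. is_coloring X ul ol w cs \<and> cs ! 0 = xi \<and> cs ! length w = xj} = (Cons xi) ` Col xi xj w"
  proof (intro set_eqI iffI)
    fix cs assume cs: "cs \<in> {cs. is_coloring X ul ol w cs \<and> cs ! 0 = xi \<and> cs ! length w = xj}"
    then have "length cs = Suc (length w)" unfolding is_coloring_def by auto
    then obtain c os where cs': "cs = c # os" and len: "length os = length w" by (cases cs) auto
    with cs have "c = xi" by simp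
    with cs cs' len show "cs \<in> (Cons xi) ` Col xi xj w"
      unfolding Col_def using is_coloring_dec[OF len] nth_length_last[of xi os] by auto
  next
    fix cs assume "cs \<in> (Cons xi) ` Col xi xj w"
    then obtain os where "cs = xi # os" "os \<in> Col xi xj w" by auto
    then show "cs \<in> {cs. is_coloring X ul ol w cs \<and> cs ! 0 = xi \<and> cs ! length w = xj}"
      unfolding Col_def using is_coloring_dec[of os w xi] assms nth_length_last[of xi os] by auto
  qed
  then show ?thesis unfolding Phi_def by (simp add: card_image)
qed

end

fun glue :: "('a list \<times> 'a list \<times> 'a list \<times> 'a list \<times> 'a \<times> 'a \<times> 'a) \<times> ('a list \<times> 'a list \<times> 'a list) \<Rightarrow> 'a list" where
  "glue ((o0, o1, o2, o3, e0, e1, e2), (p0, p1, p2)) = o0 @ p0 @ o1 @ p1 @ o2 @ p2 @ o3"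

lemma split_len: "length os = length x + length y \<Longrightarrow> \<exists>a b. os = a @ b \<and> length a = length x \<and> length b = length y"
  by (rule exI[of _ "take (length x) os"], rule exI[of _ "drop (length x) os"]) auto

lemma dec7:
  assumes "length o0 = length u0" "length p0 = length A0" "length o1 = length u1" "length p1 = length A1"
    "length o2 = length u2" "length p2 = length A2"
  shows "dec (u0 @ A0 @ u1 @ A1 @ u2 @ A2 @ u3) c (o0 @ p0 @ o1 @ p1 @ o2 @ p2 @ o3) =
    (let i0 = last (c # o0); e0 = last (i0 # p0); i1 = last (e0 # o1); e1 = last (i1 # p1);
         i2 = last (e1 # o2); e2 = last (i2 # p2) in
     dec u0 c o0 @ dec A0 i0 p0 @ dec u1 e0 o1 @ dec A1 i1 p1 @ dec u2 e1 o2 @ dec A2 i2 p2 @ dec u3 e2 o3)"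
  using assms by (simp add: dec_append Let_def)

lemma last7: "last (c # o0 @ p0 @ o1 @ p1 @ o2 @ p2 @ o3) =
    (let i0 = last (c # o0); e0 = last (i0 # p0); i1 = last (e0 # o1); e1 = last (i1 # p1);
         i2 = last (e1 # o2); e2 = last (i2 # p2) in last (e2 # o3))"
  by (simp add: Let_def last_cons_append[of c o0] last_cons_append[of _ p0] last_cons_append[of _ o1]
      last_cons_append[of _ p1] last_cons_append[of _ o2] last_cons_append[of _ p2])

context bq begin

lemma last_in: "c \<in> X \<Longrightarrow> set o1 \<subseteq> X \<Longrightarrow> last (c # o1) \<in> X"
  by (induction o1 arbitrary: c) auto

definition Fib :: "letter list \<Rightarrow> letter list \<Rightarrow> letter list \<Rightarrow> 'a \<Rightarrow> 'a \<Rightarrow> 'a \<Rightarrow> 'a \<Rightarrow> 'a \<Rightarrow> 'a \<Rightarrow> ('a list \<times> 'a list \<times> 'a list) set" where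
  "Fib A0 A1 A2 i0 i1 i2 e0 e1 e2 = {(p0, p1, p2). length p0 = length A0 \<and> length p1 = length A1 \<and> length p2 = length A2 \<and>
     set p0 \<subseteq> X \<and> set p1 \<subseteq> X \<and> set p2 \<subseteq> X \<and> last (i0 # p0) = e0 \<and> last (i1 # p1) = e1 \<and> last (i2 # p2) = e2 \<and>
     CC ul ol (set (dec A0 i0 p0) \<union> set (dec A1 i1 p1) \<union> set (dec A2 i2 p2))}"

definition Gs :: "'a \<Rightarrow> 'a \<Rightarrow> letter list \<Rightarrow> letter list \<Rightarrow> letter list \<Rightarrow> letter list \<Rightarrow> ('a list \<times> 'a list \<times> 'a list \<times> 'a list \<times> 'a \<times> 'a \<times> 'a) set" where
  "Gs xi xj u0 u1 u2 u3 = {(o0, o1, o2, o3, e0, e1, e2). length o0 = length u0 \<and> length o1 = length u1 \<and> length o2 = length u2 \<and> length o3 = length u3 \<and>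
     set o0 \<subseteq> X \<and> set o1 \<subseteq> X \<and> set o2 \<subseteq> X \<and> set o3 \<subseteq> X \<and> e0 \<in> X \<and> e1 \<in> X \<and> e2 \<in> X \<and>
     CC ul ol (set (dec u0 xi o0) \<union> set (dec u1 e0 o1) \<union> set (dec u2 e1 o2) \<union> set (dec u3 e2 o3)) \<and> last (e2 # o3) = xj}"

fun FibG :: "'a \<Rightarrow> letter list \<Rightarrow> letter list \<Rightarrow> letter list \<Rightarrow> ('a list \<times> 'a list \<times> 'a list \<times> 'a list \<times> 'a \<times> 'a \<times> 'a) \<Rightarrow> ('a list \<times> 'a list \<times> 'a list) set" where
  "FibG xi A0 A1 A2 (o0, o1, o2, o3, e0, e1, e2) = Fib A0 A1 A2 (last (xi # o0)) (last (e0 # o1)) (last (e1 # o2)) e0 e1 e2"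

lemma finite_Fib: "finite (Fib A0 A1 A2 i0 i1 i2 e0 e1 e2)"
proof -
  have "Fib A0 A1 A2 i0 i1 i2 e0 e1 e2 \<subseteq> {p. set p \<subseteq> X \<and> length p = length A0} \<times> {p. set p \<subseteq> X \<and> length p = length A1} \<times> {p. set p \<subseteq> X \<and> length p = length A2}"
    unfolding Fib_def by auto
  then show ?thesis by (rule finite_subset) (intro finite_cartesian_product finite_lists_length_eq fin)+
qed

lemma finite_Gs: "finite (Gs xi xj u0 u1 u2 u3)"
proof -
  have "Gs xi xj u0 u1 u2 u3 \<subseteq> {p. set p \<subseteq> X \<and> length p = length u0} \<times> {p. set p \<subseteq> X \<and> length p = length u1} \<times> {p. set p \<subseteq> X \<and> length p = length u2} \<times> {p. set p \<subseteq> X \<and> length p = length u3} \<times> X \<times> X \<times> X"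
    unfolding Gs_def by auto
  then show ?thesis by (rule finite_subset) (intro finite_cartesian_product finite_lists_length_eq fin)+
qed

lemma Col_decomp:
  assumes xi: "xi \<in> X"
    and disj: "\<forall>z \<in> set A0 \<union> set A1 \<union> set A2. fst z \<notin> labels (u0 @ u1 @ u2 @ u3)"
  shows "Col xi xj (u0 @ A0 @ u1 @ A1 @ u2 @ A2 @ u3) = glue ` (SIGMA g:Gs xi xj u0 u1 u2 u3. FibG xi A0 A1 A2 g)"
    "inj_on glue (SIGMA g:Gs xi xj u0 u1 u2 u3. FibG xi A0 A1 A2 g)"
proof -
  have CCsplit: "CC ul ol (set (dec u0 c o0 @ dec A0 i0 p0 @ dec u1 e0 o1 @ dec A1 i1 p1 @ dec u2 e1 o2 @ dec A2 i2 p2 @ dec u3 e2 o3))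
     \<longleftrightarrow> CC ul ol (set (dec u0 c o0) \<union> set (dec u1 e0 o1) \<union> set (dec u2 e1 o2) \<union> set (dec u3 e2 o3)) \<and>
         CC ul ol (set (dec A0 i0 p0) \<union> set (dec A1 i1 p1) \<union> set (dec A2 i2 p2))"
    for c o0 i0 p0 e0 o1 i1 p1 e1 o2 i2 p2 e2 o3
  proof -
    let ?U = "set (dec u0 c o0) \<union> set (dec u1 e0 o1) \<union> set (dec u2 e1 o2) \<union> set (dec u3 e2 o3)"
    let ?A = "set (dec A0 i0 p0) \<union> set (dec A1 i1 p1) \<union> set (dec A2 i2 p2)"
    have eq: "set (dec u0 c o0 @ dec A0 i0 p0 @ dec u1 e0 o1 @ dec A1 i1 p1 @ dec u2 e1 o2 @ dec A2 i2 p2 @ dec u3 e2 o3) = ?U \<union> ?A"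
      by auto
    have "\<forall>z\<in>?U. \<forall>z'\<in>?A. fst (fst z) \<noteq> fst (fst z')"
    proof (intro ballI)
      fix z z' assume z: "z \<in> ?U" and z': "z' \<in> ?A"
      from z have "fst z \<in> set (u0 @ u1 @ u2 @ u3)" using lab_dec by fastforce
      then have "fst (fst z) \<in> labels (u0 @ u1 @ u2 @ u3)" unfolding labels_def by auto
      moreover from z' have "fst z' \<in> set A0 \<union> set A1 \<union> set A2" using lab_dec by fastforce
      ultimately show "fst (fst z) \<noteq> fst (fst z')" using disj by metis
    qed
    then show ?thesis unfolding eq by (rule CC_union)
  qed
  show "inj_on glue (SIGMA g:Gs xi xj u0 u1 u2 u3. FibG xi A0 A1 A2 g)"
  proof (rule inj_onI)
    fix x y assume x: "x \<in> (SIGMA g:Gs xi xj u0 u1 u2 u3. FibG xi A0 A1 A2 g)" and y: "y \<in> (SIGMA g:Gs xi xj u0 u1 u2 u3. FibG xi A0 A1 A2 g)"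
      and eq: "glue x = glue y"
    obtain o0 o1 o2 o3 e0 e1 e2 p0 p1 p2 where xd: "x = ((o0, o1, o2, o3, e0, e1, e2), (p0, p1, p2))" by (cases x) auto
    obtain o0' o1' o2' o3' e0' e1' e2' p0' p1' p2' where yd: "y = ((o0', o1', o2', o3', e0', e1', e2'), (p0', p1', p2'))" by (cases y) auto
    from x y have lens: "length o0 = length o0'" "length o1 = length o1'" "length o2 = length o2'" "length o3 = length o3'"
      "length p0 = length p0'" "length p1 = length p1'" "length p2 = length p2'"
      unfolding xd yd Gs_def by (auto simp: Fib_def)
    from eq lens have E: "o0 = o0'" "p0 = p0'" "o1 = o1'" "p1 = p1'" "o2 = o2'" "p2 = p2'" "o3 = o3'"
      unfolding xd yd by auto
    from x y have "e0 = last (last (xi # o0) # p0)" "e0' = last (last (xi # o0') # p0')"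
      "e1 = last (last (e0 # o1) # p1)" "e1' = last (last (e0' # o1') # p1')"
      "e2 = last (last (e1 # o2) # p2)" "e2' = last (last (e1' # o2') # p2')"
      unfolding xd yd by (auto simp: Fib_def)
    with E have "e0 = e0'" "e1 = e1'" "e2 = e2'" by auto
    with E show "x = y" unfolding xd yd by simp
  qed
  show "Col xi xj (u0 @ A0 @ u1 @ A1 @ u2 @ A2 @ u3) = glue ` (SIGMA g:Gs xi xj u0 u1 u2 u3. FibG xi A0 A1 A2 g)"
  proof (intro set_eqI iffI)
    fix os assume "os \<in> Col xi xj (u0 @ A0 @ u1 @ A1 @ u2 @ A2 @ u3)"
    then have os: "length os = length (u0 @ A0 @ u1 @ A1 @ u2 @ A2 @ u3)" "set os \<subseteq> X"
      "CC ul ol (set (dec (u0 @ A0 @ u1 @ A1 @ u2 @ A2 @ u3) xi os))" "last (xi # os) = xj"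
      unfolding Col_def by auto
    from split_len[of os u0 "A0 @ u1 @ A1 @ u2 @ A2 @ u3"] os(1) obtain o0 r0 where
      s0: "os = o0 @ r0" "length o0 = length u0" "length r0 = length (A0 @ u1 @ A1 @ u2 @ A2 @ u3)" by auto
    from split_len[of r0 A0 "u1 @ A1 @ u2 @ A2 @ u3"] s0(3) obtain p0 r1 where
      s1: "r0 = p0 @ r1" "length p0 = length A0" "length r1 = length (u1 @ A1 @ u2 @ A2 @ u3)" by auto
    from split_len[of r1 u1 "A1 @ u2 @ A2 @ u3"] s1(3) obtain o1 r2 where
      s2: "r1 = o1 @ r2" "length o1 = length u1" "length r2 = length (A1 @ u2 @ A2 @ u3)" by auto
    from split_len[of r2 A1 "u2 @ A2 @ u3"] s2(3) obtain p1 r3 where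
      s3: "r2 = p1 @ r3" "length p1 = length A1" "length r3 = length (u2 @ A2 @ u3)" by auto
    from split_len[of r3 u2 "A2 @ u3"] s3(3) obtain o2 r4 where
      s4: "r3 = o2 @ r4" "length o2 = length u2" "length r4 = length (A2 @ u3)" by auto
    from split_len[of r4 A2 "u3"] s4(3) obtain p2 o3 where
      s5: "r4 = p2 @ o3" "length p2 = length A2" "length o3 = length u3" by auto
    have osd: "os = o0 @ p0 @ o1 @ p1 @ o2 @ p2 @ o3" using s0 s1 s2 s3 s4 s5 by simp
    define i0 where "i0 = last (xi # o0)"
    define e0 where "e0 = last (i0 # p0)"
    define i1 where "i1 = last (e0 # o1)"
    define e1 where "e1 = last (i1 # p1)"
    define i2 where "i2 = last (e1 # o2)"
    define e2 where "e2 = last (i2 # p2)"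
    have sets: "set o0 \<subseteq> X" "set p0 \<subseteq> X" "set o1 \<subseteq> X" "set p1 \<subseteq> X" "set o2 \<subseteq> X" "set p2 \<subseteq> X" "set o3 \<subseteq> X"
      using os(2) unfolding osd by auto
    have inX: "i0 \<in> X" "e0 \<in> X" "i1 \<in> X" "e1 \<in> X" "i2 \<in> X" "e2 \<in> X"
      unfolding e2_def i2_def e1_def i1_def e0_def i0_def using sets xi by (intro last_in; simp)+
    have D: "dec (u0 @ A0 @ u1 @ A1 @ u2 @ A2 @ u3) xi os =
       dec u0 xi o0 @ dec A0 i0 p0 @ dec u1 e0 o1 @ dec A1 i1 p1 @ dec u2 e1 o2 @ dec A2 i2 p2 @ dec u3 e2 o3"
      unfolding osd using dec7[OF s0(2) s1(2) s2(2) s3(2) s4(2) s5(2), of u3 xi o3]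
      unfolding i0_def e0_def i1_def e1_def i2_def e2_def Let_def by simp
    have L: "last (xi # os) = last (e2 # o3)"
      unfolding osd last7 i0_def e0_def i1_def e1_def i2_def e2_def Let_def ..
    from os(3) have CCs: "CC ul ol (set (dec u0 xi o0) \<union> set (dec u1 e0 o1) \<union> set (dec u2 e1 o2) \<union> set (dec u3 e2 o3))"
        "CC ul ol (set (dec A0 i0 p0) \<union> set (dec A1 i1 p1) \<union> set (dec A2 i2 p2))"
      unfolding D CCsplit by auto
    have "(o0, o1, o2, o3, e0, e1, e2) \<in> Gs xi xj u0 u1 u2 u3"
      unfolding Gs_def using s0 s2 s4 s5 sets inX CCs(1) L os(4) by auto
    moreover have "(p0, p1, p2) \<in> FibG xi A0 A1 A2 (o0, o1, o2, o3, e0, e1, e2)"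
      unfolding FibG.simps i0_def[symmetric] i1_def[symmetric] i2_def[symmetric]
      unfolding Fib_def using s1(2) s3(2) s5(2) sets CCs(2) e0_def e1_def e2_def by (auto simp del: last.simps)
    ultimately show "os \<in> glue ` (SIGMA g:Gs xi xj u0 u1 u2 u3. FibG xi A0 A1 A2 g)"
      unfolding osd by (auto intro!: image_eqI[where x = "((o0, o1, o2, o3, e0, e1, e2), (p0, p1, p2))"])
  next
    fix os assume "os \<in> glue ` (SIGMA g:Gs xi xj u0 u1 u2 u3. FibG xi A0 A1 A2 g)"
    then obtain o0 o1 o2 o3 e0 e1 e2 p0 p1 p2 where
      G: "(o0, o1, o2, o3, e0, e1, e2) \<in> Gs xi xj u0 u1 u2 u3" and
      F: "(p0, p1, p2) \<in> Fib A0 A1 A2 (last (xi # o0)) (last (e0 # o1)) (last (e1 # o2)) e0 e1 e2" and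
      osd: "os = o0 @ p0 @ o1 @ p1 @ o2 @ p2 @ o3"
      by force
    define i0 where "i0 = last (xi # o0)"
    define i1 where "i1 = last (e0 # o1)"
    define i2 where "i2 = last (e1 # o2)"
    from G have g: "length o0 = length u0" "length o1 = length u1" "length o2 = length u2" "length o3 = length u3"
      "set o0 \<subseteq> X" "set o1 \<subseteq> X" "set o2 \<subseteq> X" "set o3 \<subseteq> X"
      "CC ul ol (set (dec u0 xi o0) \<union> set (dec u1 e0 o1) \<union> set (dec u2 e1 o2) \<union> set (dec u3 e2 o3))" "last (e2 # o3) = xj"
      unfolding Gs_def by auto
    from F have f: "length p0 = length A0" "length p1 = length A1" "length p2 = length A2"
      "set p0 \<subseteq> X" "set p1 \<subseteq> X" "set p2 \<subseteq> X" "last (i0 # p0) = e0" "last (i1 # p1) = e1" "last (i2 # p2) = e2"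
      "CC ul ol (set (dec A0 i0 p0) \<union> set (dec A1 i1 p1) \<union> set (dec A2 i2 p2))"
      unfolding Fib_def i0_def i1_def i2_def by auto
    have D: "dec (u0 @ A0 @ u1 @ A1 @ u2 @ A2 @ u3) xi os =
       dec u0 xi o0 @ dec A0 i0 p0 @ dec u1 e0 o1 @ dec A1 i1 p1 @ dec u2 e1 o2 @ dec A2 i2 p2 @ dec u3 e2 o3"
      unfolding osd using dec7[OF g(1) f(1) g(2) f(2) g(3) f(3), of u3 xi o3]
      by (simp only: Let_def i0_def[symmetric] f(7) i1_def[symmetric] f(8) i2_def[symmetric] f(9))
    have L: "last (xi # os) = last (e2 # o3)"
      unfolding osd last7
      by (simp only: Let_def i0_def[symmetric] f(7) i1_def[symmetric] f(8) i2_def[symmetric] f(9))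
    show "os \<in> Col xi xj (u0 @ A0 @ u1 @ A1 @ u2 @ A2 @ u3)"
      unfolding Col_def using g f L D CCsplit unfolding osd by auto
  qed
qed

lemma card_Col:
  assumes "xi \<in> X"
    and "\<forall>z \<in> set A0 \<union> set A1 \<union> set A2. fst z \<notin> labels (u0 @ u1 @ u2 @ u3)"
  shows "card (Col xi xj (u0 @ A0 @ u1 @ A1 @ u2 @ A2 @ u3)) = (\<Sum>g\<in>Gs xi xj u0 u1 u2 u3. card (FibG xi A0 A1 A2 g))"
proof -
  have "card (Col xi xj (u0 @ A0 @ u1 @ A1 @ u2 @ A2 @ u3)) = card (SIGMA g:Gs xi xj u0 u1 u2 u3. FibG xi A0 A1 A2 g)"
    using Col_decomp[OF assms] by (simp add: card_image)
  also have "\<dots> = (\<Sum>g\<in>Gs xi xj u0 u1 u2 u3. card (FibG xi A0 A1 A2 g))"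
  proof (rule card_SigmaI)
    show "finite (Gs xi xj u0 u1 u2 u3)" by (rule finite_Gs)
    show "\<forall>g\<in>Gs xi xj u0 u1 u2 u3. finite (FibG xi A0 A1 A2 g)"
      by (auto simp: finite_Fib)
  qed
  finally show ?thesis .
qed

lemma GEN:
  assumes xi: "xi \<in> X"
    and dA: "\<forall>z \<in> set A0 \<union> set A1 \<union> set A2. fst z \<notin> labels (u0 @ u1 @ u2 @ u3)"
    and dB: "\<forall>z \<in> set B0 \<union> set B1 \<union> set B2. fst z \<notin> labels (u0 @ u1 @ u2 @ u3)"
    and fib: "\<And>i0 i1 i2 e0 e1 e2. i0 \<in> X \<Longrightarrow> i1 \<in> X \<Longrightarrow> i2 \<in> X \<Longrightarrow> e0 \<in> X \<Longrightarrow> e1 \<in> X \<Longrightarrow> e2 \<in> X \<Longrightarrow>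
       card (Fib A0 A1 A2 i0 i1 i2 e0 e1 e2) = card (Fib B0 B1 B2 i0 i1 i2 e0 e1 e2)"
  shows "Phi X ul ol xi xj (u0 @ A0 @ u1 @ A1 @ u2 @ A2 @ u3) = Phi X ul ol xi xj (u0 @ B0 @ u1 @ B1 @ u2 @ B2 @ u3)"
proof -
  have "(\<Sum>g\<in>Gs xi xj u0 u1 u2 u3. card (FibG xi A0 A1 A2 g)) = (\<Sum>g\<in>Gs xi xj u0 u1 u2 u3. card (FibG xi B0 B1 B2 g))"
  proof (rule sum.cong)
    fix g assume g: "g \<in> Gs xi xj u0 u1 u2 u3"
    obtain o0 o1 o2 o3 e0 e1 e2 where gd: "g = (o0, o1, o2, o3, e0, e1, e2)" by (cases g) auto
    from g have "set o0 \<subseteq> X" "set o1 \<subseteq> X" "set o2 \<subseteq> X" "e0 \<in> X" "e1 \<in> X" "e2 \<in> X"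
      unfolding gd Gs_def by auto
    then show "card (FibG xi A0 A1 A2 g) = card (FibG xi B0 B1 B2 g)"
      unfolding gd FibG.simps using xi by (intro fib last_in) auto
  qed simp
  then show ?thesis using card_Col[OF xi dA] card_Col[OF xi dB] Phi_Col[OF xi] by simp
qed

end

lemma CC_empty[simp]: "CC ul ol {}"
  unfolding CC_def by simp

lemma CC_insert_T:
  "CC ul ol (insert ((l, True, s), a, b) S) \<longleftrightarrow> CC ul ol S \<and> (\<forall>c d. ((l, False, s), c, d) \<in> S \<longrightarrow> crossing_ok ul ol s a b c d)"
  unfolding CC_def by auto

lemma CC_insert_F:
  "CC ul ol (insert ((l, False, s), c, d) S) \<longleftrightarrow> CC ul ol S \<and> (\<forall>a b. ((l, True, s), a, b) \<in> S \<longrightarrow> crossing_ok ul ol s a b c d)"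
  unfolding CC_def by auto

lemma len2: "length p = 2 \<longleftrightarrow> (\<exists>x y. p = [x, y])"
  by (auto simp: numeral_2_eq_2 length_Suc_conv)

lemma len0: "length p = 0 \<longleftrightarrow> p = []"
  by simp

context bq begin

lemma det:
  assumes "crossing_ok ul ol s oi oo ui uo" "crossing_ok ul ol s oi' oo' ui' uo'"
    and X: "oi \<in> X" "oo \<in> X" "ui \<in> X" "uo \<in> X" "oi' \<in> X" "oo' \<in> X" "ui' \<in> X" "uo' \<in> X"
    and o: "oi = oi' \<or> oo = oo'" and u: "ui = ui' \<or> uo = uo'"
  shows "oi = oi' \<and> oo = oo' \<and> ui = ui' \<and> uo = uo'"
proof (cases s)
  case True
  with assms(1,2) have e: "ui = ul uo oi" "oo = ol oi uo" "ui' = ul uo' oi'" "oo' = ol oi' uo'"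
    unfolding crossing_ok_def by auto
  show ?thesis
  proof (cases "oi = oi'")
    case oi: True
    show ?thesis
    proof (cases "ui = ui'")
      case True
      with oi e X have "uo = uo'" by (metis inj_ul)
      with oi True e show ?thesis by simp
    next
      case False
      with u have "uo = uo'" by simp
      with oi e show ?thesis by simp
    qed
  next
    case oi: False
    with o have oo: "oo = oo'" by simp
    show ?thesis
    proof (cases "ui = ui'")
      case True
      with oo e X have "uo = uo' \<and> oi = oi'" using inj_S[of uo oi uo' oi'] by simp
      with oi show ?thesis by simp
    next
      case False
      with u have "uo = uo'" by simp
      with oo e X have "oi = oi'" by (metis inj_ol)
      with oi show ?thesis by simp
    qed
  qed
next
  case False
  with assms(1,2) have e: "uo = ul ui oo" "oi = ol oo ui" "uo' = ul ui' oo'" "oi' = ol oo' ui'"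
    unfolding crossing_ok_def by auto
  show ?thesis
  proof (cases "oo = oo'")
    case oo: True
    show ?thesis
    proof (cases "ui = ui'")
      case True
      with oo e show ?thesis by simp
    next
      case False
      with u have "uo = uo'" by simp
      with oo e X have "ui = ui'" by (metis inj_ul)
      with False show ?thesis by simp
    qed
  next
    case oo: False
    with o have oi: "oi = oi'" by simp
    show ?thesis
    proof (cases "ui = ui'")
      case True
      with oi e X have "oo = oo'" by (metis inj_ol)
      with oo show ?thesis by simp
    next
      case False
      with u have "uo = uo'" by simp
      with oi e X have "ui = ui' \<and> oo = oo'" using inj_S[of ui oo ui' oo'] by simp
      with False show ?thesis by simp
    qed
  qed
qed

lemma ext:
  assumes x: "x \<in> X" and y: "y \<in> X"
  shows "\<exists>x'\<in>X. \<exists>y'\<in>X. crossing_ok ul ol s (if po then x' else x) (if po then x else x') (if pu then y' else y) (if pu then y else y')"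
proof -
  obtain x1 where x1: "x1 \<in> X" "ol x1 y = x" using sur_ol[OF y x] by blast
  obtain a b where ab: "a \<in> X" "b \<in> X" "ol b a = x" "ul a b = y" using sur_S[OF x y] by blast
  obtain b2 where b2: "b2 \<in> X" "ul b2 x = y" using sur_ul[OF x y] by blast
  have c1: "crossing_ok ul ol True x1 x (ul y x1) y" using x1 unfolding crossing_ok_def by simp
  have c2: "crossing_ok ul ol True b x y a" using ab unfolding crossing_ok_def by simp
  have c3: "crossing_ok ul ol True x (ol x y) (ul y x) y" unfolding crossing_ok_def by simp
  have c4: "crossing_ok ul ol True x (ol x b2) y b2" using b2 unfolding crossing_ok_def by simp
  have d1: "crossing_ok ul ol False (ol x b2) x b2 y" using b2 unfolding crossing_ok_def by simp
  have d2: "crossing_ok ul ol False (ol x y) x y (ul y x)" unfolding crossing_ok_def by simp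
  have d3: "crossing_ok ul ol False x b a y" using ab unfolding crossing_ok_def by simp
  have d4: "crossing_ok ul ol False x x1 y (ul y x1)" using x1 unfolding crossing_ok_def by simp
  show ?thesis
  proof (cases s; cases po; cases pu)
    assume "s" "po" "pu"
    then show ?thesis using c1 x1 ab b2 x y by (intro bexI[of _ "x1"] bexI[of _ "ul y x1"]) simp_all
  next
    assume "s" "po" "\<not> pu"
    then show ?thesis using c2 x1 ab b2 x y by (intro bexI[of _ "b"] bexI[of _ "a"]) simp_all
  next
    assume "s" "\<not> po" "pu"
    then show ?thesis using c3 x1 ab b2 x y by (intro bexI[of _ "ol x y"] bexI[of _ "ul y x"]) simp_all
  next
    assume "s" "\<not> po" "\<not> pu"
    then show ?thesis using c4 x1 ab b2 x y by (intro bexI[of _ "ol x b2"] bexI[of _ "b2"]) simp_all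
  next
    assume "\<not> s" "po" "pu"
    then show ?thesis using d1 x1 ab b2 x y by (intro bexI[of _ "ol x b2"] bexI[of _ "b2"]) simp_all
  next
    assume "\<not> s" "po" "\<not> pu"
    then show ?thesis using d2 x1 ab b2 x y by (intro bexI[of _ "ol x y"] bexI[of _ "ul y x"]) simp_all
  next
    assume "\<not> s" "\<not> po" "pu"
    then show ?thesis using d3 x1 ab b2 x y by (intro bexI[of _ "b"] bexI[of _ "a"]) simp_all
  next
    assume "\<not> s" "\<not> po" "\<not> pu"
    then show ?thesis using d4 x1 ab b2 x y by (intro bexI[of _ "x1"] bexI[of _ "ul y x1"]) simp_all
  qed
qed

lemma D_surj: "c \<in> X \<Longrightarrow> \<exists>z\<in>X. ol z z = c"
proof -
  assume c: "c \<in> X"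
  have inj: "inj_on (\<lambda>z. ol z z) X"
  proof (rule inj_onI)
    fix z z' assume zz: "z \<in> X" "z' \<in> X" "ol z z = ol z' z'"
    then have "ul z z = ul z' z'" using idem by simp
    with zz show "z = z'" using inj_S[of z z z' z'] by simp
  qed
  have sub: "(\<lambda>z. ol z z) ` X \<subseteq> X" by auto
  have "(\<lambda>z. ol z z) ` X = X" by (rule endo_inj_surj[OF fin sub inj])
  with c have "c \<in> (\<lambda>z. ol z z) ` X" by simp
  then obtain z where "z \<in> X" "c = ol z z" by (rule imageE)
  then show ?thesis by blast
qed

lemma diag: "x \<in> X \<Longrightarrow> y \<in> X \<Longrightarrow> ol y x = ul x y \<Longrightarrow> x = y"
proof -
  assume xy: "x \<in> X" "y \<in> X" "ol y x = ul x y"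
  have "ol y x \<in> X" using xy by simp
  from D_surj[OF this] obtain z where z: "z \<in> X" "ol z z = ol y x" by blast
  have "ul z z = ul x y" using idem[OF z(1)] z(2) xy(3) by simp
  have "x = z \<and> y = z" by (rule inj_S) (use z xy \<open>ul z z = ul x y\<close> in auto)
  then show ?thesis by simp
qed

end

lemma card_sub1: "(\<And>x y. x \<in> S \<Longrightarrow> y \<in> S \<Longrightarrow> x = y) \<Longrightarrow> card S = (if S = {} then 0 else 1)"
proof -
  assume u: "\<And>x y. x \<in> S \<Longrightarrow> y \<in> S \<Longrightarrow> x = y"
  show ?thesis
  proof (cases "S = {}")
    case False
    then obtain x where x: "x \<in> S" by blast
    with u have "S = {x}" by blast
    then show ?thesis by simp
  qed simp
qed

lemma card_sub1': "(\<And>x y. x \<in> S \<Longrightarrow> y \<in> S \<Longrightarrow> x = y) \<Longrightarrow> (S \<noteq> {} \<longleftrightarrow> P) \<Longrightarrow> card S = (if P then 1 else 0)"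
proof -
  assume u: "\<And>x y. x \<in> S \<Longrightarrow> y \<in> S \<Longrightarrow> x = y" and ne: "S \<noteq> {} \<longleftrightarrow> P"
  have "card S = (if S = {} then 0 else 1)" by (rule card_sub1) (rule u)
  with ne show ?thesis by auto
qed

context bq begin

lemma card_Fib222:
  assumes l: "length A0 = 2" "length A1 = 2" "length A2 = 2" and e: "e0 \<in> X" "e1 \<in> X" "e2 \<in> X"
  shows "card (Fib A0 A1 A2 i0 i1 i2 e0 e1 e2) = card {(x, y, z). x \<in> X \<and> y \<in> X \<and> z \<in> X \<and>
     CC ul ol (set (dec A0 i0 [x, e0]) \<union> set (dec A1 i1 [y, e1]) \<union> set (dec A2 i2 [z, e2]))}"
proof -
  let ?S = "{(x, y, z). x \<in> X \<and> y \<in> X \<and> z \<in> X \<and>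
     CC ul ol (set (dec A0 i0 [x, e0]) \<union> set (dec A1 i1 [y, e1]) \<union> set (dec A2 i2 [z, e2]))}"
  let ?f = "\<lambda>(x, y, z). ([x, e0], [y, e1], [z, e2])"
  have "Fib A0 A1 A2 i0 i1 i2 e0 e1 e2 = ?f ` ?S"
  proof (intro set_eqI iffI)
    fix p assume p: "p \<in> Fib A0 A1 A2 i0 i1 i2 e0 e1 e2"
    obtain p0 p1 p2 where pd: "p = (p0, p1, p2)" by (cases p) auto
    from p l obtain x x' y y' z z' where "p0 = [x, x']" "p1 = [y, y']" "p2 = [z, z']"
      unfolding pd Fib_def by (auto simp: len2)
    with p show "p \<in> ?f ` ?S" unfolding pd Fib_def by (auto intro!: image_eqI[where x = "(x, y, z)"])
  next
    fix p assume "p \<in> ?f ` ?S"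
    then show "p \<in> Fib A0 A1 A2 i0 i1 i2 e0 e1 e2" using l e unfolding Fib_def by auto
  qed
  moreover have "inj_on ?f ?S" by (rule inj_onI) auto
  ultimately show ?thesis by (simp add: card_image)
qed

lemma card_Fib220:
  assumes l: "length A0 = 2" "length A1 = 2" and e: "e0 \<in> X" "e1 \<in> X"
  shows "card (Fib A0 A1 [] i0 i1 i2 e0 e1 e2) = (if i2 = e2 then card {(x, y). x \<in> X \<and> y \<in> X \<and>
     CC ul ol (set (dec A0 i0 [x, e0]) \<union> set (dec A1 i1 [y, e1]))} else 0)"
proof -
  let ?S = "{(x, y). x \<in> X \<and> y \<in> X \<and> CC ul ol (set (dec A0 i0 [x, e0]) \<union> set (dec A1 i1 [y, e1]))}"
  let ?f = "\<lambda>(x, y). ([x, e0], [y, e1], []::'a list)"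
  have "Fib A0 A1 [] i0 i1 i2 e0 e1 e2 = (if i2 = e2 then ?f ` ?S else {})"
  proof (intro set_eqI iffI)
    fix p assume p: "p \<in> Fib A0 A1 [] i0 i1 i2 e0 e1 e2"
    obtain p0 p1 p2 where pd: "p = (p0, p1, p2)" by (cases p) auto
    from p l obtain x x' y y' where "p0 = [x, x']" "p1 = [y, y']" "p2 = []"
      unfolding pd Fib_def by (auto simp: len2)
    with p show "p \<in> (if i2 = e2 then ?f ` ?S else {})" unfolding pd Fib_def by (auto intro!: image_eqI[where x = "(x, y)"])
  next
    fix p assume "p \<in> (if i2 = e2 then ?f ` ?S else {})"
    then show "p \<in> Fib A0 A1 [] i0 i1 i2 e0 e1 e2" using l e unfolding Fib_def by (auto split: if_splits)
  qed
  moreover have "inj_on ?f ?S" by (rule inj_onI) auto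
  ultimately show ?thesis by (simp add: card_image)
qed

lemma card_Fib200:
  assumes l: "length A0 = 2" and e: "e0 \<in> X"
  shows "card (Fib A0 [] [] i0 i1 i2 e0 e1 e2) = (if i1 = e1 \<and> i2 = e2 then card {x. x \<in> X \<and>
     CC ul ol (set (dec A0 i0 [x, e0]))} else 0)"
proof -
  let ?S = "{x. x \<in> X \<and> CC ul ol (set (dec A0 i0 [x, e0]))}"
  let ?f = "\<lambda>x. ([x, e0], []::'a list, []::'a list)"
  have "Fib A0 [] [] i0 i1 i2 e0 e1 e2 = (if i1 = e1 \<and> i2 = e2 then ?f ` ?S else {})"
  proof (intro set_eqI iffI)
    fix p assume p: "p \<in> Fib A0 [] [] i0 i1 i2 e0 e1 e2"
    obtain p0 p1 p2 where pd: "p = (p0, p1, p2)" by (cases p) auto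
    from p l obtain x x' where "p0 = [x, x']" "p1 = []" "p2 = []"
      unfolding pd Fib_def by (auto simp: len2)
    with p show "p \<in> (if i1 = e1 \<and> i2 = e2 then ?f ` ?S else {})" unfolding pd Fib_def by auto
  next
    fix p assume "p \<in> (if i1 = e1 \<and> i2 = e2 then ?f ` ?S else {})"
    then show "p \<in> Fib A0 [] [] i0 i1 i2 e0 e1 e2" using l e unfolding Fib_def by (auto split: if_splits)
  qed
  moreover have "inj_on ?f ?S" by (rule inj_onI) auto
  ultimately show ?thesis by (simp add: card_image)
qed

lemma card_Fib000:
  "card (Fib [] [] [] i0 i1 i2 e0 e1 e2) = (if i0 = e0 \<and> i1 = e1 \<and> i2 = e2 then 1 else 0)"
proof -
  have "Fib [] [] [] i0 i1 i2 e0 e1 e2 = (if i0 = e0 \<and> i1 = e1 \<and> i2 = e2 then {([], [], [])} else {})"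
    unfolding Fib_def by auto
  then show ?thesis by simp
qed

lemma r1_fib:
  assumes i: "i0 \<in> X" and e: "e0 \<in> X"
  shows "card {x. x \<in> X \<and> CC ul ol (set (dec [(l, ov, s), (l, \<not> ov, s)] i0 [x, e0]))} = (if i0 = e0 then 1 else 0)"
proof -
  let ?S = "{x. x \<in> X \<and> CC ul ol (set (dec [(l, ov, s), (l, \<not> ov, s)] i0 [x, e0]))}"
  have S: "?S = {x. x \<in> X \<and> (if ov then crossing_ok ul ol s i0 x x e0 else crossing_ok ul ol s x e0 i0 x)}"
    by (cases ov) (auto simp: CC_insert_T CC_insert_F)
  have u: "x = y" if "x \<in> ?S" "y \<in> ?S" for x y
  proof (cases ov)
    case True
    with that S have "crossing_ok ul ol s i0 x x e0" "crossing_ok ul ol s i0 y y e0" "x \<in> X" "y \<in> X" by auto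
    from det[OF this(1,2)] this i e show ?thesis by auto
  next
    case False
    with that S have "crossing_ok ul ol s x e0 i0 x" "crossing_ok ul ol s y e0 i0 y" "x \<in> X" "y \<in> X" by auto
    from det[OF this(1,2)] this i e show ?thesis by auto
  qed
  have ne: "?S \<noteq> {} \<longleftrightarrow> i0 = e0"
  proof
    assume "?S \<noteq> {}"
    then obtain x where x: "x \<in> ?S" by blast
    show "i0 = e0"
    proof (cases ov; cases s)
      assume "ov" "s"
      with x S have "x \<in> X" "x = ul e0 i0" "x = ol i0 e0" unfolding crossing_ok_def by auto
      then show ?thesis using diag[OF e i] by simp
    next
      assume "ov" "\<not> s"
      with x S have "e0 = ul x x" "i0 = ol x x" "x \<in> X" unfolding crossing_ok_def by auto
      then show ?thesis using idem by simp
    next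
      assume "\<not> ov" "s"
      with x S have "i0 = ul x x" "e0 = ol x x" "x \<in> X" unfolding crossing_ok_def by auto
      then show ?thesis using idem by simp
    next
      assume "\<not> ov" "\<not> s"
      with x S have "x \<in> X" "x = ul i0 e0" "x = ol e0 i0" unfolding crossing_ok_def by auto
      then show ?thesis using diag[OF i e] by simp
    qed
  next
    assume ie: "i0 = e0"
    obtain z where z: "z \<in> X" "ol z z = e0" using D_surj[OF e] by blast
    have "(if ov then crossing_ok ul ol s i0 x x e0 else crossing_ok ul ol s x e0 i0 x)"
      if "x = (if ov = s then ul e0 e0 else z)" for x
      using that ie z idem[OF z(1)] idem[OF e] unfolding crossing_ok_def by (cases ov; cases s) auto
    then have "(if ov = s then ul e0 e0 else z) \<in> ?S" unfolding S using z e by auto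
    then show "?S \<noteq> {}" by blast
  qed
  show ?thesis by (rule card_sub1'[OF u ne])
qed

end

context bq begin

lemma r2_fib:
  assumes ab: "a \<noteq> b" and X: "io \<in> X" "eo \<in> X" "iu \<in> X" "eu \<in> X"
    and UP: "UP = (if rv then [(b, False, \<not> s), (a, False, s)] else [(a, False, s), (b, False, \<not> s)])"
  shows "card {(x, y). x \<in> X \<and> y \<in> X \<and> CC ul ol (set (dec [(a, True, s), (b, True, \<not> s)] io [x, eo]) \<union> set (dec UP iu [y, eu]))}
     = (if io = eo \<and> iu = eu then 1 else 0)"
proof -
  let ?S = "{(x, y). x \<in> X \<and> y \<in> X \<and> CC ul ol (set (dec [(a, True, s), (b, True, \<not> s)] io [x, eo]) \<union> set (dec UP iu [y, eu]))}"
  let ?C = "\<lambda>x y. if rv then crossing_ok ul ol s io x y eu \<and> crossing_ok ul ol (\<not> s) x eo iu y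
                else crossing_ok ul ol s io x iu y \<and> crossing_ok ul ol (\<not> s) x eo y eu"
  have S: "?S = {(x, y). x \<in> X \<and> y \<in> X \<and> ?C x y}"
    using ab unfolding UP by (cases rv) (auto simp: CC_insert_T CC_insert_F)
  have u: "p = q" if "p \<in> ?S" "q \<in> ?S" for p q
  proof -
    obtain x y where p: "p = (x, y)" by (cases p)
    obtain x' y' where q: "q = (x', y')" by (cases q)
    show ?thesis
    proof (cases rv)
      case True
      with that S have "crossing_ok ul ol s io x y eu" "crossing_ok ul ol s io x' y' eu" "x \<in> X" "y \<in> X" "x' \<in> X" "y' \<in> X"
        unfolding p q by auto
      from det[OF this(1,2)] this X show ?thesis unfolding p q by auto
    next
      case False
      with that S have "crossing_ok ul ol s io x iu y" "crossing_ok ul ol s io x' iu y'" "x \<in> X" "y \<in> X" "x' \<in> X" "y' \<in> X"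
        unfolding p q by auto
      from det[OF this(1,2)] this X show ?thesis unfolding p q by auto
    qed
  qed
  have ne: "?S \<noteq> {} \<longleftrightarrow> io = eo \<and> iu = eu"
  proof
    assume "?S \<noteq> {}"
    then obtain x y where xy: "(x, y) \<in> ?S" by auto
    then have xyX: "x \<in> X" "y \<in> X" by auto
    from xy have C: "?C x y" by (subst (asm) S) simp
    show "io = eo \<and> iu = eu"
    proof (cases rv; cases s)
      assume "rv" "s"
      with C have e: "y = ul eu io" "x = ol io eu" "y = ul iu eo" "x = ol eo iu" unfolding crossing_ok_def by auto
      have "ol io eu = ol eo iu" "ul eu io = ul iu eo" using e by metis+
      then have "eu = iu \<and> io = eo" using inj_S[of eu io iu eo] X by blast
      then show ?thesis by simp
    next
      assume "rv" "\<not> s"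
      with C have "eu = ul y x" "io = ol x y" "iu = ul y x" "eo = ol x y" unfolding crossing_ok_def by auto
      then show ?thesis by simp
    next
      assume "\<not> rv" "s"
      with C have e: "iu = ul y io" "x = ol io y" "eu = ul y eo" "x = ol eo y" unfolding crossing_ok_def by auto
      have "ol io y = ol eo y" using e by metis
      then have "io = eo" using inj_ol[of io eo y] X xyX by blast
      with e show ?thesis by metis
    next
      assume "\<not> rv" "\<not> s"
      with C have e: "y = ul iu x" "io = ol x iu" "y = ul eu x" "eo = ol x eu" unfolding crossing_ok_def by auto
      have "ul iu x = ul eu x" using e by metis
      then have "iu = eu" using inj_ul[of iu eu x] X xyX by blast
      with e show ?thesis by metis
    qed
  next
    assume "io = eo \<and> iu = eu"
    then have eq: "eo = io" "eu = iu" by auto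
    have "\<exists>x y. (x, y) \<in> ?S"
    proof (cases rv; cases s)
      assume "rv" "s"
      then show ?thesis unfolding S unfolding eq using X unfolding crossing_ok_def
        by (intro exI[of _ "ol io iu"] exI[of _ "ul iu io"]) auto
    next
      assume "rv" "\<not> s"
      obtain y x where yx: "y \<in> X" "x \<in> X" "ol x y = io" "ul y x = iu" using sur_S[of io iu] X by blast
      then show ?thesis unfolding S unfolding eq using X \<open>rv\<close> \<open>\<not> s\<close> unfolding crossing_ok_def
        by (intro exI[of _ x] exI[of _ y]) auto
    next
      assume "\<not> rv" "s"
      obtain y where y: "y \<in> X" "ul y io = iu" using sur_ul[of io iu] X by blast
      then show ?thesis unfolding S unfolding eq using X \<open>\<not> rv\<close> \<open>s\<close> unfolding crossing_ok_def
        by (intro exI[of _ "ol io y"] exI[of _ y]) auto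
    next
      assume "\<not> rv" "\<not> s"
      obtain x where x: "x \<in> X" "ol x iu = io" using sur_ol[of iu io] X by blast
      then show ?thesis unfolding S unfolding eq using X \<open>\<not> rv\<close> \<open>\<not> s\<close> unfolding crossing_ok_def
        by (intro exI[of _ x] exI[of _ "ul iu x"]) auto
    qed
    then show "?S \<noteq> {}" by blast
  qed
  show ?thesis by (rule card_sub1'[OF u ne])
qed

lemma card_swap2:
  "card {(x, y). x \<in> X \<and> y \<in> X \<and> P x y} = card {(x, y). x \<in> X \<and> y \<in> X \<and> P y x}"
proof -
  have "{(x, y). x \<in> X \<and> y \<in> X \<and> P x y} = (\<lambda>(x, y). (y, x)) ` {(x, y). x \<in> X \<and> y \<in> X \<and> P y x}"
  proof (intro set_eqI iffI)
    fix p assume p: "p \<in> {(x, y). x \<in> X \<and> y \<in> X \<and> P x y}"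
    obtain x y where pd: "p = (x, y)" by (cases p)
    show "p \<in> (\<lambda>(x, y). (y, x)) ` {(x, y). x \<in> X \<and> y \<in> X \<and> P y x}"
      by (rule image_eqI[where x = "(y, x)"]) (use p pd in simp_all)
  next
    fix p assume "p \<in> (\<lambda>(x, y). (y, x)) ` {(x, y). x \<in> X \<and> y \<in> X \<and> P y x}"
    then obtain q where q: "q \<in> {(x, y). x \<in> X \<and> y \<in> X \<and> P y x}" "p = (\<lambda>(x, y). (y, x)) q" by (rule imageE)
    obtain x y where qd: "q = (x, y)" by (cases q)
    show "p \<in> {(x, y). x \<in> X \<and> y \<in> X \<and> P x y}" using q qd by simp
  qed
  moreover have "inj_on (\<lambda>(x, y). (y, x)) {(x, y). x \<in> X \<and> y \<in> X \<and> P y x}"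
    by (rule inj_onI) auto
  ultimately show ?thesis by (simp add: card_image)
qed

end

lemma transfer:
  assumes fin: "finite R2" and cardeq: "card R1 = card R2"
    and s1: "\<And>b m m'. (b, m) \<in> R1 \<Longrightarrow> (b, m') \<in> R1 \<Longrightarrow> m = m'"
    and s2: "\<And>b m m'. (b, m) \<in> R2 \<Longrightarrow> (b, m') \<in> R2 \<Longrightarrow> m = m'"
    and imp: "\<And>b m. (b, m) \<in> R1 \<Longrightarrow> \<exists>m'. (b, m') \<in> R2"
  shows "card {m. (b, m) \<in> R1} = card {m. (b, m) \<in> R2}"
proof -
  have i1: "inj_on fst R1"
  proof (rule inj_onI)
    fix x y assume "x \<in> R1" "y \<in> R1" "fst x = fst y"
    then show "x = y" using s1[of "fst x" "snd x" "snd y"] by (cases x, cases y) auto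
  qed
  have i2: "inj_on fst R2"
  proof (rule inj_onI)
    fix x y assume "x \<in> R2" "y \<in> R2" "fst x = fst y"
    then show "x = y" using s2[of "fst x" "snd x" "snd y"] by (cases x, cases y) auto
  qed
  have sub: "fst ` R1 \<subseteq> fst ` R2"
  proof
    fix b assume "b \<in> fst ` R1"
    then obtain m where "(b, m) \<in> R1" by force
    then obtain m' where "(b, m') \<in> R2" using imp by blast
    then show "b \<in> fst ` R2" by force
  qed
  have "card (fst ` R1) = card (fst ` R2)" using card_image[OF i1] card_image[OF i2] cardeq by simp
  then have eq: "fst ` R1 = fst ` R2" using card_subset_eq[OF finite_imageI[OF fin] sub] by simp
  have c1: "card {m. (b, m) \<in> R1} = (if b \<in> fst ` R1 then 1 else 0)"
    by (rule card_sub1') (use s1 in blast, force)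
  have c2: "card {m. (b, m) \<in> R2} = (if b \<in> fst ` R2 then 1 else 0)"
    by (rule card_sub1') (use s2 in blast, force)
  show ?thesis using c1 c2 eq by simp
qed

context bq begin

definition r3eq where
  "r3eq sa sb sc oT oM oB t0 t1 t2 m0 m1 m2 b0 b1 b2 \<longleftrightarrow>
    crossing_ok ul ol sa (if oT then t0 else t1) (if oT then t1 else t2) (if oM then m0 else m1) (if oM then m1 else m2) \<and>
    crossing_ok ul ol sb (if oT then t1 else t0) (if oT then t2 else t1) (if oB then b0 else b1) (if oB then b1 else b2) \<and>
    crossing_ok ul ol sc (if oM then m1 else m0) (if oM then m2 else m1) (if oB then b1 else b0) (if oB then b2 else b1)"

definition R3 where
  "R3 sa sb sc oT oM oB = {((t0, t2, m0, m2, b0, b2), (t1, m1, b1)).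
     t0 \<in> X \<and> t1 \<in> X \<and> t2 \<in> X \<and> m0 \<in> X \<and> m1 \<in> X \<and> m2 \<in> X \<and> b0 \<in> X \<and> b1 \<in> X \<and> b2 \<in> X \<and>
     r3eq sa sb sc oT oM oB t0 t1 t2 m0 m1 m2 b0 b1 b2}"

lemma r3_CC:
  assumes "distinct [a, b, c]"
  shows "CC ul ol (set (dec (r3_pieces a b c sa sb sc oT oM oB ! 0) t0 [t1, t2]) \<union>
      set (dec (r3_pieces a b c sa sb sc oT oM oB ! 1) m0 [m1, m2]) \<union>
      set (dec (r3_pieces a b c sa sb sc oT oM oB ! 2) b0 [b1, b2]))
    \<longleftrightarrow> r3eq sa sb sc oT oM oB t0 t1 t2 m0 m1 m2 b0 b1 b2"
  using assms unfolding r3_pieces_def r3eq_def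
  by (cases oT; cases oM; cases oB) (auto simp: CC_insert_T CC_insert_F)

lemma R3_inj:
  assumes A: "r3eq sa sb sc oT oM oB t0 t1 t2 m0 m1 m2 b0 b1 b2"
    and A': "r3eq sa sb sc oT oM oB t0' t1 t2' m0' m1 m2' b0' b1 b2'"
    and X: "t0 \<in> X" "t1 \<in> X" "t2 \<in> X" "m0 \<in> X" "m1 \<in> X" "m2 \<in> X" "b0 \<in> X" "b1 \<in> X" "b2 \<in> X"
      "t0' \<in> X" "t2' \<in> X" "m0' \<in> X" "m2' \<in> X" "b0' \<in> X" "b2' \<in> X"
  shows "t0 = t0' \<and> t2 = t2' \<and> m0 = m0' \<and> m2 = m2' \<and> b0 = b0' \<and> b2 = b2'"
proof -
  note a = A[unfolded r3eq_def] and a' = A'[unfolded r3eq_def]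
  have Da: "(if oT then t0 else t1) = (if oT then t0' else t1) \<and> (if oT then t1 else t2) = (if oT then t1 else t2') \<and>
     (if oM then m0 else m1) = (if oM then m0' else m1) \<and> (if oM then m1 else m2) = (if oM then m1 else m2')"
    by (rule det[OF conjunct1[OF a] conjunct1[OF a']]) (use X in auto)
  have Db: "(if oT then t1 else t0) = (if oT then t1 else t0') \<and> (if oT then t2 else t1) = (if oT then t2' else t1) \<and>
     (if oB then b0 else b1) = (if oB then b0' else b1) \<and> (if oB then b1 else b2) = (if oB then b1 else b2')"
    by (rule det[OF conjunct1[OF conjunct2[OF a]] conjunct1[OF conjunct2[OF a']]]) (use X in auto)
  have Dc: "(if oM then m1 else m0) = (if oM then m1 else m0') \<and> (if oM then m2 else m1) = (if oM then m2' else m1) \<and>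
     (if oB then b1 else b0) = (if oB then b1 else b0') \<and> (if oB then b2 else b1) = (if oB then b2' else b1)"
    by (rule det[OF conjunct2[OF conjunct2[OF a]] conjunct2[OF conjunct2[OF a']]]) (use X in auto)
  show ?thesis using Da Db Dc by (cases oT; cases oM; cases oB) auto
qed

lemma R3_single:
  assumes A: "r3eq sa sb sc oT oM oB t0 t1 t2 m0 m1 m2 b0 b1 b2"
    and A': "r3eq sa sb sc oT oM oB t0 t1' t2 m0 m1' m2 b0 b1' b2"
    and X: "t0 \<in> X" "t1 \<in> X" "t2 \<in> X" "m0 \<in> X" "m1 \<in> X" "m2 \<in> X" "b0 \<in> X" "b1 \<in> X" "b2 \<in> X"
      "t1' \<in> X" "m1' \<in> X" "b1' \<in> X"
  shows "t1 = t1' \<and> m1 = m1' \<and> b1 = b1'"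
proof -
  note a = A[unfolded r3eq_def] and a' = A'[unfolded r3eq_def]
  have Da: "(if oT then t0 else t1) = (if oT then t0 else t1') \<and> (if oT then t1 else t2) = (if oT then t1' else t2) \<and>
     (if oM then m0 else m1) = (if oM then m0 else m1') \<and> (if oM then m1 else m2) = (if oM then m1' else m2)"
    by (rule det[OF conjunct1[OF a] conjunct1[OF a']]) (use X in auto)
  have Db: "(if oT then t1 else t0) = (if oT then t1' else t0) \<and> (if oT then t2 else t1) = (if oT then t2 else t1') \<and>
     (if oB then b0 else b1) = (if oB then b0 else b1') \<and> (if oB then b1 else b2) = (if oB then b1' else b2)"
    by (rule det[OF conjunct1[OF conjunct2[OF a]] conjunct1[OF conjunct2[OF a']]]) (use X in auto)
  show ?thesis using Da Db by (cases oT; cases oM; cases oB) auto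
qed

lemma R3_surj:
  assumes X: "t1 \<in> X" "m1 \<in> X" "b1 \<in> X"
  shows "\<exists>t0 t2 m0 m2 b0 b2. t0 \<in> X \<and> t2 \<in> X \<and> m0 \<in> X \<and> m2 \<in> X \<and> b0 \<in> X \<and> b2 \<in> X \<and>
     r3eq sa sb sc oT oM oB t0 t1 t2 m0 m1 m2 b0 b1 b2"
proof -
  obtain xa ya where a: "xa \<in> X" "ya \<in> X" "crossing_ok ul ol sa (if oT then xa else t1) (if oT then t1 else xa) (if oM then ya else m1) (if oM then m1 else ya)"
    using ext[OF X(1) X(2), of sa oT oM] by blast
  obtain xb yb where b: "xb \<in> X" "yb \<in> X" "crossing_ok ul ol sb (if \<not> oT then xb else t1) (if \<not> oT then t1 else xb) (if oB then yb else b1) (if oB then b1 else yb)"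
    using ext[OF X(1) X(3), of sb "\<not> oT" oB] by blast
  obtain xc yc where c: "xc \<in> X" "yc \<in> X" "crossing_ok ul ol sc (if \<not> oM then xc else m1) (if \<not> oM then m1 else xc) (if \<not> oB then yc else b1) (if \<not> oB then b1 else yc)"
    using ext[OF X(2) X(3), of sc "\<not> oM" "\<not> oB"] by blast
  show ?thesis
    apply (rule exI[of _ "if oT then xa else xb"], rule exI[of _ "if oT then xb else xa"])
    apply (rule exI[of _ "if oM then ya else xc"], rule exI[of _ "if oM then xc else ya"])
    apply (rule exI[of _ "if oB then yb else yc"], rule exI[of _ "if oB then yc else yb"])
    using a b c unfolding r3eq_def by (cases oT; cases oM; cases oB) auto
qed

lemma R3_card: "card (R3 sa sb sc oT oM oB) = card (X \<times> X \<times> X)"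
proof -
  have inj: "inj_on snd (R3 sa sb sc oT oM oB)"
  proof (rule inj_onI)
    fix p q assume p: "p \<in> R3 sa sb sc oT oM oB" and q: "q \<in> R3 sa sb sc oT oM oB" and s: "snd p = snd q"
    obtain t0 t2 m0 m2 b0 b2 t1 m1 b1 where pd: "p = ((t0, t2, m0, m2, b0, b2), (t1, m1, b1))" by (cases p) auto
    obtain t0' t2' m0' m2' b0' b2' t1' m1' b1' where qd: "q = ((t0', t2', m0', m2', b0', b2'), (t1', m1', b1'))" by (cases q) auto
    from s have e: "t1' = t1" "m1' = m1" "b1' = b1" unfolding pd qd by auto
    from p q have "r3eq sa sb sc oT oM oB t0 t1 t2 m0 m1 m2 b0 b1 b2" "r3eq sa sb sc oT oM oB t0' t1 t2' m0' m1 m2' b0' b1 b2'"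
      "t0 \<in> X" "t1 \<in> X" "t2 \<in> X" "m0 \<in> X" "m1 \<in> X" "m2 \<in> X" "b0 \<in> X" "b1 \<in> X" "b2 \<in> X"
      "t0' \<in> X" "t2' \<in> X" "m0' \<in> X" "m2' \<in> X" "b0' \<in> X" "b2' \<in> X"
      unfolding pd qd R3_def e by auto
    from R3_inj[OF this] show "p = q" unfolding pd qd e by simp
  qed
  have im: "snd ` R3 sa sb sc oT oM oB = X \<times> X \<times> X"
  proof (intro set_eqI iffI)
    fix m assume "m \<in> snd ` R3 sa sb sc oT oM oB"
    then show "m \<in> X \<times> X \<times> X" unfolding R3_def by auto
  next
    fix m assume m: "m \<in> X \<times> X \<times> X"
    obtain t1 m1 b1 where md: "m = (t1, m1, b1)" by (cases m) auto
    with m have X: "t1 \<in> X" "m1 \<in> X" "b1 \<in> X" by auto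
    from R3_surj[OF X, of sa sb sc oT oM oB] obtain t0 t2 m0 m2 b0 b2 where
      r: "t0 \<in> X" "t2 \<in> X" "m0 \<in> X" "m2 \<in> X" "b0 \<in> X" "b2 \<in> X" "r3eq sa sb sc oT oM oB t0 t1 t2 m0 m1 m2 b0 b1 b2"
      by blast
    then have "((t0, t2, m0, m2, b0, b2), (t1, m1, b1)) \<in> R3 sa sb sc oT oM oB" unfolding R3_def using X by simp
    then show "m \<in> snd ` R3 sa sb sc oT oM oB" unfolding md by (rule rev_image_eqI) simp
  qed
  show ?thesis using card_image[OF inj] im by simp
qed

lemma R3_finite: "finite (R3 sa sb sc oT oM oB)"
proof -
  have "R3 sa sb sc oT oM oB \<subseteq> (X \<times> X \<times> X \<times> X \<times> X \<times> X) \<times> (X \<times> X \<times> X)"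
    unfolding R3_def by auto
  then show ?thesis by (rule finite_subset) (intro finite_cartesian_product fin)+
qed

lemma R3_s: "(bd, m) \<in> R3 sa sb sc oT oM oB \<Longrightarrow> (bd, m') \<in> R3 sa sb sc oT oM oB \<Longrightarrow> m = m'"
proof -
  assume p: "(bd, m) \<in> R3 sa sb sc oT oM oB" and q: "(bd, m') \<in> R3 sa sb sc oT oM oB"
  obtain t0 t2 m0 m2 b0 b2 where bd: "bd = (t0, t2, m0, m2, b0, b2)" by (cases bd) auto
  obtain t1 m1 b1 where md: "m = (t1, m1, b1)" by (cases m) auto
  obtain t1' m1' b1' where md': "m' = (t1', m1', b1')" by (cases m') auto
  from p q have "r3eq sa sb sc oT oM oB t0 t1 t2 m0 m1 m2 b0 b1 b2" "r3eq sa sb sc oT oM oB t0 t1' t2 m0 m1' m2 b0 b1' b2"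
     "t0 \<in> X" "t1 \<in> X" "t2 \<in> X" "m0 \<in> X" "m1 \<in> X" "m2 \<in> X" "b0 \<in> X" "b1 \<in> X" "b2 \<in> X"
      "t1' \<in> X" "m1' \<in> X" "b1' \<in> X"
    unfolding bd md md' R3_def by auto
  from R3_single[OF this] show ?thesis unfolding md md' by simp
qed

lemma R3_transfer:
  assumes "\<And>bd m. (bd, m) \<in> R3 sa sb sc oT oM oB \<Longrightarrow> \<exists>m'. (bd, m') \<in> R3 sa' sb' sc' oT' oM' oB'"
  shows "card {m. (bd, m) \<in> R3 sa sb sc oT oM oB} = card {m. (bd, m) \<in> R3 sa' sb' sc' oT' oM' oB'}"
  by (rule transfer[OF R3_finite]) (simp add: R3_card, (erule (1) R3_s)+, rule assms)

lemma wcase0: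
  assumes X: "t0\<in>X" "t1\<in>X" "t2\<in>X" "m0\<in>X" "m1\<in>X" "m2\<in>X" "b0\<in>X" "b1\<in>X" "b2\<in>X"
    and P: "crossing_ok ul ol False t1 t2 m1 m2" "crossing_ok ul ol False t0 t1 b1 b2" "crossing_ok ul ol False m0 m1 b0 b1"
  shows "crossing_ok ul ol False (t0) ((ol t2 b0)) (m0) ((ol m2 (ul b0 t2)))" "crossing_ok ul ol False ((ol t2 b0)) (t2) (b0) ((ul b0 t2))" "crossing_ok ul ol False ((ol m2 (ul b0 t2))) (m2) ((ul b0 t2)) (b2)"
  using P X unfolding crossing_ok_def by (auto simp: L1 L2 L3)

lemma wcase1:
  assumes X: "t0\<in>X" "t1\<in>X" "t2\<in>X" "m0\<in>X" "m1\<in>X" "m2\<in>X" "b0\<in>X" "b1\<in>X" "b2\<in>X"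
    and P: "crossing_ok ul ol False t0 t1 m1 m2" "crossing_ok ul ol False t1 t2 b1 b2" "crossing_ok ul ol True m0 m1 b0 b1"
  shows "crossing_ok ul ol False ((ol t2 m0)) (t2) (m0) ((ul m0 t2))" "crossing_ok ul ol False (t0) ((ol t2 m0)) (b0) ((ul b0 (ol t2 m0)))" "crossing_ok ul ol True ((ul m0 t2)) (m2) ((ul b0 (ol t2 m0))) (b2)"
  using P X unfolding crossing_ok_def by (auto simp: L1 L2 L3)

lemma wcase2:
  assumes X: "t0\<in>X" "t1\<in>X" "t2\<in>X" "m0\<in>X" "m1\<in>X" "m2\<in>X" "b0\<in>X" "b1\<in>X" "b2\<in>X"
    and P: "crossing_ok ul ol False t0 t1 m1 m2" "crossing_ok ul ol True t1 t2 b0 b1" "crossing_ok ul ol False m0 m1 b1 b2"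
  shows "crossing_ok ul ol False ((ol t2 m0)) (t2) (m0) ((ul m0 t2))" "crossing_ok ul ol True (t0) ((ol t2 m0)) ((ul b2 t0)) (b2)" "crossing_ok ul ol False ((ul m0 t2)) (m2) (b0) ((ul b2 t0))"
  using P X unfolding crossing_ok_def by (auto simp: L1 L2 L3)

lemma wcase3:
  assumes X: "t0\<in>X" "t1\<in>X" "t2\<in>X" "m0\<in>X" "m1\<in>X" "m2\<in>X" "b0\<in>X" "b1\<in>X" "b2\<in>X"
    and P: "crossing_ok ul ol False t0 t1 m0 m1" "crossing_ok ul ol True t1 t2 b1 b2" "crossing_ok ul ol True m1 m2 b0 b1"
  shows "crossing_ok ul ol False ((ol t2 (ol m0 b2))) (t2) ((ol m0 b2)) (m2)" "crossing_ok ul ol True (t0) ((ol t2 (ol m0 b2))) (b0) ((ul b2 m0))" "crossing_ok ul ol True (m0) ((ol m0 b2)) ((ul b2 m0)) (b2)"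
  using P X unfolding crossing_ok_def by (auto simp: L1 L2 L3)

lemma wcase4:
  assumes X: "t0\<in>X" "t1\<in>X" "t2\<in>X" "m0\<in>X" "m1\<in>X" "m2\<in>X" "b0\<in>X" "b1\<in>X" "b2\<in>X"
    and P: "crossing_ok ul ol True t1 t2 m1 m2" "crossing_ok ul ol False t0 t1 b0 b1" "crossing_ok ul ol False m0 m1 b1 b2"
  shows "crossing_ok ul ol True (t0) ((ol t0 (ol m2 b0))) (m0) ((ol m2 b0))" "crossing_ok ul ol False ((ol t0 (ol m2 b0))) (t2) ((ul b0 m2)) (b2)" "crossing_ok ul ol False ((ol m2 b0)) (m2) (b0) ((ul b0 m2))"
  using P X unfolding crossing_ok_def by (auto simp: L1 L2 L3)

lemma wcase5:
  assumes X: "t0\<in>X" "t1\<in>X" "t2\<in>X" "m0\<in>X" "m1\<in>X" "m2\<in>X" "b0\<in>X" "b1\<in>X" "b2\<in>X"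
    and P: "crossing_ok ul ol True t1 t2 m0 m1" "crossing_ok ul ol False t0 t1 b1 b2" "crossing_ok ul ol True m1 m2 b0 b1"
  shows "crossing_ok ul ol True (t0) ((ol t0 m2)) ((ul m2 t0)) (m2)" "crossing_ok ul ol False ((ol t0 m2)) (t2) (b0) ((ul b0 t2))" "crossing_ok ul ol True (m0) ((ul m2 t0)) ((ul b0 t2)) (b2)"
  using P X unfolding crossing_ok_def by (auto simp: L1 L2 L3)

lemma wcase6:
  assumes X: "t0\<in>X" "t1\<in>X" "t2\<in>X" "m0\<in>X" "m1\<in>X" "m2\<in>X" "b0\<in>X" "b1\<in>X" "b2\<in>X"
    and P: "crossing_ok ul ol True t1 t2 m0 m1" "crossing_ok ul ol True t0 t1 b0 b1" "crossing_ok ul ol False m1 m2 b1 b2"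
  shows "crossing_ok ul ol True (t0) ((ol t0 m2)) ((ul m2 t0)) (m2)" "crossing_ok ul ol True ((ol t0 m2)) (t2) ((ul b2 (ol t0 m2))) (b2)" "crossing_ok ul ol False (m0) ((ul m2 t0)) (b0) ((ul b2 (ol t0 m2)))"
  using P X unfolding crossing_ok_def by (auto simp: L1 L2 L3)

lemma wcase7:
  assumes X: "t0\<in>X" "t1\<in>X" "t2\<in>X" "m0\<in>X" "m1\<in>X" "m2\<in>X" "b0\<in>X" "b1\<in>X" "b2\<in>X"
    and P: "crossing_ok ul ol True t0 t1 m0 m1" "crossing_ok ul ol True t1 t2 b0 b1" "crossing_ok ul ol True m1 m2 b1 b2"
  shows "crossing_ok ul ol True ((ol t0 b2)) (t2) ((ol m0 (ul b2 t0))) (m2)" "crossing_ok ul ol True (t0) ((ol t0 b2)) ((ul b2 t0)) (b2)" "crossing_ok ul ol True (m0) ((ol m0 (ul b2 t0))) (b0) ((ul b2 t0))"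
  using P X unfolding crossing_ok_def by (auto simp: L1 L2 L3)


lemma Wimp0: "(bd, m) \<in> R3 False False False False False False \<Longrightarrow> \<exists>m'. (bd, m') \<in> R3 False False False True True True"
proof -
  assume a: "(bd, m) \<in> R3 False False False False False False"
  obtain t0 t2 m0 m2 b0 b2 where bd: "bd = (t0, t2, m0, m2, b0, b2)" by (cases bd) auto
  obtain t1 m1 b1 where m: "m = (t1, m1, b1)" by (cases m) auto
  from a have X: "t0\<in>X" "t1\<in>X" "t2\<in>X" "m0\<in>X" "m1\<in>X" "m2\<in>X" "b0\<in>X" "b1\<in>X" "b2\<in>X"
    unfolding bd m R3_def by auto
  from a have P: "crossing_ok ul ol False t1 t2 m1 m2" "crossing_ok ul ol False t0 t1 b1 b2" "crossing_ok ul ol False m0 m1 b0 b1"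
    unfolding bd m R3_def r3eq_def by auto
  note Q = wcase0[OF X P]
  show ?thesis unfolding bd R3_def r3eq_def
    by (rule exI[of _ "(ol t2 b0, ol m2 (ul b0 t2), ul b0 t2)"]) (use X Q in simp)
qed

lemma Wimp1: "(bd, m) \<in> R3 False False True True False False \<Longrightarrow> \<exists>m'. (bd, m') \<in> R3 False False True False True True"
proof -
  assume a: "(bd, m) \<in> R3 False False True True False False"
  obtain t0 t2 m0 m2 b0 b2 where bd: "bd = (t0, t2, m0, m2, b0, b2)" by (cases bd) auto
  obtain t1 m1 b1 where m: "m = (t1, m1, b1)" by (cases m) auto
  from a have X: "t0\<in>X" "t1\<in>X" "t2\<in>X" "m0\<in>X" "m1\<in>X" "m2\<in>X" "b0\<in>X" "b1\<in>X" "b2\<in>X"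
    unfolding bd m R3_def by auto
  from a have P: "crossing_ok ul ol False t0 t1 m1 m2" "crossing_ok ul ol False t1 t2 b1 b2" "crossing_ok ul ol True m0 m1 b0 b1"
    unfolding bd m R3_def r3eq_def by auto
  note Q = wcase1[OF X P]
  show ?thesis unfolding bd R3_def r3eq_def
    by (rule exI[of _ "(ol t2 m0, ul m0 t2, ul b0 (ol t2 m0))"]) (use X Q in simp)
qed

lemma Wimp2: "(bd, m) \<in> R3 False True False True False True \<Longrightarrow> \<exists>m'. (bd, m') \<in> R3 False True False False True False"
proof -
  assume a: "(bd, m) \<in> R3 False True False True False True"
  obtain t0 t2 m0 m2 b0 b2 where bd: "bd = (t0, t2, m0, m2, b0, b2)" by (cases bd) auto
  obtain t1 m1 b1 where m: "m = (t1, m1, b1)" by (cases m) auto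
  from a have X: "t0\<in>X" "t1\<in>X" "t2\<in>X" "m0\<in>X" "m1\<in>X" "m2\<in>X" "b0\<in>X" "b1\<in>X" "b2\<in>X"
    unfolding bd m R3_def by auto
  from a have P: "crossing_ok ul ol False t0 t1 m1 m2" "crossing_ok ul ol True t1 t2 b0 b1" "crossing_ok ul ol False m0 m1 b1 b2"
    unfolding bd m R3_def r3eq_def by auto
  note Q = wcase2[OF X P]
  show ?thesis unfolding bd R3_def r3eq_def
    by (rule exI[of _ "(ol t2 m0, ul m0 t2, ul b2 t0)"]) (use X Q in simp)
qed

lemma Wimp3: "(bd, m) \<in> R3 False True True True True False \<Longrightarrow> \<exists>m'. (bd, m') \<in> R3 False True True False False True"
proof -
  assume a: "(bd, m) \<in> R3 False True True True True False"
  obtain t0 t2 m0 m2 b0 b2 where bd: "bd = (t0, t2, m0, m2, b0, b2)" by (cases bd) auto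
  obtain t1 m1 b1 where m: "m = (t1, m1, b1)" by (cases m) auto
  from a have X: "t0\<in>X" "t1\<in>X" "t2\<in>X" "m0\<in>X" "m1\<in>X" "m2\<in>X" "b0\<in>X" "b1\<in>X" "b2\<in>X"
    unfolding bd m R3_def by auto
  from a have P: "crossing_ok ul ol False t0 t1 m0 m1" "crossing_ok ul ol True t1 t2 b1 b2" "crossing_ok ul ol True m1 m2 b0 b1"
    unfolding bd m R3_def r3eq_def by auto
  note Q = wcase3[OF X P]
  show ?thesis unfolding bd R3_def r3eq_def
    by (rule exI[of _ "(ol t2 (ol m0 b2), ol m0 b2, ul b2 m0)"]) (use X Q in simp)
qed

lemma Wimp4: "(bd, m) \<in> R3 True False False False False True \<Longrightarrow> \<exists>m'. (bd, m') \<in> R3 True False False True True False"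
proof -
  assume a: "(bd, m) \<in> R3 True False False False False True"
  obtain t0 t2 m0 m2 b0 b2 where bd: "bd = (t0, t2, m0, m2, b0, b2)" by (cases bd) auto
  obtain t1 m1 b1 where m: "m = (t1, m1, b1)" by (cases m) auto
  from a have X: "t0\<in>X" "t1\<in>X" "t2\<in>X" "m0\<in>X" "m1\<in>X" "m2\<in>X" "b0\<in>X" "b1\<in>X" "b2\<in>X"
    unfolding bd m R3_def by auto
  from a have P: "crossing_ok ul ol True t1 t2 m1 m2" "crossing_ok ul ol False t0 t1 b0 b1" "crossing_ok ul ol False m0 m1 b1 b2"
    unfolding bd m R3_def r3eq_def by auto
  note Q = wcase4[OF X P]
  show ?thesis unfolding bd R3_def r3eq_def
    by (rule exI[of _ "(ol t0 (ol m2 b0), ol m2 b0, ul b0 m2)"]) (use X Q in simp)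
qed

lemma Wimp5: "(bd, m) \<in> R3 True False True False True False \<Longrightarrow> \<exists>m'. (bd, m') \<in> R3 True False True True False True"
proof -
  assume a: "(bd, m) \<in> R3 True False True False True False"
  obtain t0 t2 m0 m2 b0 b2 where bd: "bd = (t0, t2, m0, m2, b0, b2)" by (cases bd) auto
  obtain t1 m1 b1 where m: "m = (t1, m1, b1)" by (cases m) auto
  from a have X: "t0\<in>X" "t1\<in>X" "t2\<in>X" "m0\<in>X" "m1\<in>X" "m2\<in>X" "b0\<in>X" "b1\<in>X" "b2\<in>X"
    unfolding bd m R3_def by auto
  from a have P: "crossing_ok ul ol True t1 t2 m0 m1" "crossing_ok ul ol False t0 t1 b1 b2" "crossing_ok ul ol True m1 m2 b0 b1"
    unfolding bd m R3_def r3eq_def by auto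
  note Q = wcase5[OF X P]
  show ?thesis unfolding bd R3_def r3eq_def
    by (rule exI[of _ "(ol t0 m2, ul m2 t0, ul b0 t2)"]) (use X Q in simp)
qed

lemma Wimp6: "(bd, m) \<in> R3 True True False False True True \<Longrightarrow> \<exists>m'. (bd, m') \<in> R3 True True False True False False"
proof -
  assume a: "(bd, m) \<in> R3 True True False False True True"
  obtain t0 t2 m0 m2 b0 b2 where bd: "bd = (t0, t2, m0, m2, b0, b2)" by (cases bd) auto
  obtain t1 m1 b1 where m: "m = (t1, m1, b1)" by (cases m) auto
  from a have X: "t0\<in>X" "t1\<in>X" "t2\<in>X" "m0\<in>X" "m1\<in>X" "m2\<in>X" "b0\<in>X" "b1\<in>X" "b2\<in>X"
    unfolding bd m R3_def by auto
  from a have P: "crossing_ok ul ol True t1 t2 m0 m1" "crossing_ok ul ol True t0 t1 b0 b1" "crossing_ok ul ol False m1 m2 b1 b2"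
    unfolding bd m R3_def r3eq_def by auto
  note Q = wcase6[OF X P]
  show ?thesis unfolding bd R3_def r3eq_def
    by (rule exI[of _ "(ol t0 m2, ul m2 t0, ul b2 (ol t0 m2))"]) (use X Q in simp)
qed

lemma Wimp7: "(bd, m) \<in> R3 True True True True True True \<Longrightarrow> \<exists>m'. (bd, m') \<in> R3 True True True False False False"
proof -
  assume a: "(bd, m) \<in> R3 True True True True True True"
  obtain t0 t2 m0 m2 b0 b2 where bd: "bd = (t0, t2, m0, m2, b0, b2)" by (cases bd) auto
  obtain t1 m1 b1 where m: "m = (t1, m1, b1)" by (cases m) auto
  from a have X: "t0\<in>X" "t1\<in>X" "t2\<in>X" "m0\<in>X" "m1\<in>X" "m2\<in>X" "b0\<in>X" "b1\<in>X" "b2\<in>X"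
    unfolding bd m R3_def by auto
  from a have P: "crossing_ok ul ol True t0 t1 m0 m1" "crossing_ok ul ol True t1 t2 b0 b1" "crossing_ok ul ol True m1 m2 b1 b2"
    unfolding bd m R3_def r3eq_def by auto
  note Q = wcase7[OF X P]
  show ?thesis unfolding bd R3_def r3eq_def
    by (rule exI[of _ "(ol t0 b2, ol m0 (ul b2 t0), ul b2 t0)"]) (use X Q in simp)
qed


lemma r3c0: "card {m. (bd, m) \<in> R3 False False False False False False} = card {m. (bd, m) \<in> R3 False False False True True True}"
  by (intro R3_transfer) (rule Wimp0)

lemma r3c1: "card {m. (bd, m) \<in> R3 False False True True False False} = card {m. (bd, m) \<in> R3 False False True False True True}"
  by (intro R3_transfer) (rule Wimp1)

lemma r3c2: "card {m. (bd, m) \<in> R3 False True False True False True} = card {m. (bd, m) \<in> R3 False True False False True False}"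
  by (intro R3_transfer) (rule Wimp2)

lemma r3c3: "card {m. (bd, m) \<in> R3 False True True True True False} = card {m. (bd, m) \<in> R3 False True True False False True}"
  by (intro R3_transfer) (rule Wimp3)

lemma r3c4: "card {m. (bd, m) \<in> R3 True False False False False True} = card {m. (bd, m) \<in> R3 True False False True True False}"
  by (intro R3_transfer) (rule Wimp4)

lemma r3c5: "card {m. (bd, m) \<in> R3 True False True False True False} = card {m. (bd, m) \<in> R3 True False True True False True}"
  by (intro R3_transfer) (rule Wimp5)

lemma r3c6: "card {m. (bd, m) \<in> R3 True True False False True True} = card {m. (bd, m) \<in> R3 True True False True False False}"
  by (intro R3_transfer) (rule Wimp6)

lemma r3c7: "card {m. (bd, m) \<in> R3 True True True True True True} = card {m. (bd, m) \<in> R3 True True True False False False}"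
  by (intro R3_transfer) (rule Wimp7)

lemma r3_canon:
  assumes "(oM = oT) = (sb = sc)" "(oB = oT) = (sa = sc)"
  shows "card {m. (bd, m) \<in> R3 sa sb sc oT oM oB} = card {m. (bd, m) \<in> R3 sa sb sc (\<not> oT) (\<not> oM) (\<not> oB)}"
  using assms by (cases sa; cases sb; cases sc; cases oT; cases oM; cases oB) (simp_all add: r3c0 r3c1 r3c2 r3c3 r3c4 r3c5 r3c6 r3c7)

end

lemma card_perm:
  assumes "bij_betw h A A"
  shows "card {p \<in> A. \<Phi> (h p)} = card {p \<in> A. \<Phi> p}"
proof -
  have inj: "inj_on h {p \<in> A. \<Phi> (h p)}" using assms unfolding bij_betw_def by (auto intro: inj_on_subset)
  have "h ` {p \<in> A. \<Phi> (h p)} = {p \<in> A. \<Phi> p}"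
  proof (intro set_eqI iffI)
    fix p assume "p \<in> h ` {p \<in> A. \<Phi> (h p)}"
    then obtain q where "q \<in> A" "\<Phi> (h q)" "p = h q" by blast
    then show "p \<in> {p \<in> A. \<Phi> p}" using assms unfolding bij_betw_def by auto
  next
    fix p assume p: "p \<in> {p \<in> A. \<Phi> p}"
    then have "p \<in> h ` A" using assms unfolding bij_betw_def by auto
    then obtain q where "q \<in> A" "p = h q" by blast
    with p show "p \<in> h ` {p \<in> A. \<Phi> (h p)}" by blast
  qed
  with inj card_image show ?thesis by fastforce
qed

lemma bij3:
  fixes h :: "'x \<times> 'x \<times> 'x \<Rightarrow> 'x \<times> 'x \<times> 'x"
  assumes "\<And>x y z. x \<in> A \<Longrightarrow> y \<in> A \<Longrightarrow> z \<in> A \<Longrightarrow> h (x, y, z) \<in> A \<times> A \<times> A"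
    "\<And>x y z. x \<in> A \<Longrightarrow> y \<in> A \<Longrightarrow> z \<in> A \<Longrightarrow> h' (x, y, z) \<in> A \<times> A \<times> A"
    "\<And>x y z. h' (h (x, y, z)) = (x, y, z)" "\<And>x y z. h (h' (x, y, z)) = (x, y, z)"
  shows "bij_betw h (A \<times> A \<times> A) (A \<times> A \<times> A)"
proof (rule bij_betw_byWitness[where f' = h'])
  show "\<forall>a\<in>A \<times> A \<times> A. h' (h a) = a" using assms(3) by auto
  show "\<forall>a\<in>A \<times> A \<times> A. h (h' a) = a" using assms(4) by auto
  show "h ` (A \<times> A \<times> A) \<subseteq> A \<times> A \<times> A"
  proof
    fix q assume "q \<in> h ` (A \<times> A \<times> A)"
    then obtain p where p: "p \<in> A \<times> A \<times> A" "q = h p" by blast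
    obtain x y z where "p = (x, y, z)" by (cases p)
    with p assms(1) show "q \<in> A \<times> A \<times> A" by simp
  qed
  show "h' ` (A \<times> A \<times> A) \<subseteq> A \<times> A \<times> A"
  proof
    fix q assume "q \<in> h' ` (A \<times> A \<times> A)"
    then obtain p where p: "p \<in> A \<times> A \<times> A" "q = h' p" by blast
    obtain x y z where "p = (x, y, z)" by (cases p)
    with p assms(2) show "q \<in> A \<times> A \<times> A" by simp
  qed
qed

lemma key3:
  assumes "bij_betw h A A" "\<And>p. \<Psi> p = \<Phi> (h p)"
  shows "card {p \<in> A. \<Psi> p} = card {p \<in> A. \<Phi> p}"
  unfolding assms(2) by (rule card_perm[OF assms(1)])

context bq begin

definition Can where
  "Can P t0 t2 m0 m2 b0 b2 = {p \<in> X \<times> X \<times> X. case p of (x, y, z) \<Rightarrow>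
     CC ul ol (set (dec (P ! 0) t0 [x, t2]) \<union> set (dec (P ! 1) m0 [y, m2]) \<union> set (dec (P ! 2) b0 [z, b2]))}"

lemma Can_R3:
  assumes "distinct [a, b, c]" "t0 \<in> X" "t2 \<in> X" "m0 \<in> X" "m2 \<in> X" "b0 \<in> X" "b2 \<in> X"
  shows "Can (r3_pieces a b c sa sb sc oT oM oB) t0 t2 m0 m2 b0 b2 = {m. ((t0, t2, m0, m2, b0, b2), m) \<in> R3 sa sb sc oT oM oB}"
proof (intro set_eqI)
  fix m :: "'a \<times> 'a \<times> 'a"
  obtain x y z where m: "m = (x, y, z)" by (cases m)
  show "m \<in> Can (r3_pieces a b c sa sb sc oT oM oB) t0 t2 m0 m2 b0 b2 \<longleftrightarrow> m \<in> {m. ((t0, t2, m0, m2, b0, b2), m) \<in> R3 sa sb sc oT oM oB}"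
    unfolding Can_def R3_def r3_CC[OF assms(1)] m using assms(2-7) by simp
qed

lemma Can_r3:
  assumes "distinct [a, b, c]" "(oM = oT) = (sb = sc)" "(oB = oT) = (sa = sc)"
    "t0 \<in> X" "t2 \<in> X" "m0 \<in> X" "m2 \<in> X" "b0 \<in> X" "b2 \<in> X"
  shows "card (Can (r3_pieces a b c sa sb sc oT oM oB) t0 t2 m0 m2 b0 b2) =
         card (Can (r3_pieces a b c sa sb sc (\<not> oT) (\<not> oM) (\<not> oB)) t0 t2 m0 m2 b0 b2)"
  unfolding Can_R3[OF assms(1,4-9)] by (rule r3_canon[OF assms(2,3)])

definition Pos where
  "Pos P i j k i0 i1 i2 e0 e1 e2 = {p \<in> X \<times> X \<times> X. case p of (x, y, z) \<Rightarrow>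
     CC ul ol (set (dec (P ! i) i0 [x, e0]) \<union> set (dec (P ! j) i1 [y, e1]) \<union> set (dec (P ! k) i2 [z, e2]))}"

lemma Pos_Can:
  assumes "distinct [i, j, k]" "i < 3" "j < 3" "k < 3"
  shows "card (Pos P i j k i0 i1 i2 e0 e1 e2) = card (Can P
     (if i = 0 then i0 else if j = 0 then i1 else i2) (if i = 0 then e0 else if j = 0 then e1 else e2)
     (if i = 1 then i0 else if j = 1 then i1 else i2) (if i = 1 then e0 else if j = 1 then e1 else e2)
     (if i = 2 then i0 else if j = 2 then i1 else i2) (if i = 2 then e0 else if j = 2 then e1 else e2))"
proof -
  have "i = 0 \<or> i = 1 \<or> i = 2" "j = 0 \<or> j = 1 \<or> j = 2" "k = 0 \<or> k = 1 \<or> k = 2"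
    using assms(2-4) by linarith+
  then have cases: "(i, j, k) \<in> {(0, 1, 2), (0, 2, 1), (1, 0, 2), (1, 2, 0), (2, 0, 1), (2, 1, 0)}"
    using assms(1) by auto
  let ?D = "\<lambda>n ii x ee. set (dec (P ! n) ii [x, ee])"
  show ?thesis
  proof -
    from cases show ?thesis
    proof (elim insertE emptyE)
      assume "(i, j, k) = (0, 1, 2)"
      then have e: "i = 0" "j = 1" "k = 2" by simp_all
      show ?thesis unfolding e Pos_def Can_def by simp
    next
      assume "(i, j, k) = (0, 2, 1)"
      then have e: "i = 0" "j = 2" "k = 1" by simp_all
      show ?thesis unfolding e Pos_def Can_def
        apply (simp only: if_True if_False simp_thms numeral_eq_iff numeral_eq_one_iff one_eq_numeral_iff semiring_norm zero_neq_numeral numeral_neq_zero zero_neq_one one_neq_zero, rule key3[where h = "\<lambda>(x, y, z). (x, z, y)"])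
         apply (rule bij3[where h' = "\<lambda>(x, y, z). (x, z, y)"]; simp)
        apply (clarsimp simp: Un_ac)
        done
    next
      assume "(i, j, k) = (1, 0, 2)"
      then have e: "i = 1" "j = 0" "k = 2" by simp_all
      show ?thesis unfolding e Pos_def Can_def
        apply (simp only: if_True if_False simp_thms numeral_eq_iff numeral_eq_one_iff one_eq_numeral_iff semiring_norm zero_neq_numeral numeral_neq_zero zero_neq_one one_neq_zero, rule key3[where h = "\<lambda>(x, y, z). (y, x, z)"])
         apply (rule bij3[where h' = "\<lambda>(x, y, z). (y, x, z)"]; simp)
        apply (clarsimp simp: Un_ac)
        done
    next
      assume "(i, j, k) = (1, 2, 0)"
      then have e: "i = 1" "j = 2" "k = 0" by simp_all
      show ?thesis unfolding e Pos_def Can_def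
        apply (simp only: if_True if_False simp_thms numeral_eq_iff numeral_eq_one_iff one_eq_numeral_iff semiring_norm zero_neq_numeral numeral_neq_zero zero_neq_one one_neq_zero, rule key3[where h = "\<lambda>(x, y, z). (z, x, y)"])
         apply (rule bij3[where h' = "\<lambda>(x, y, z). (y, z, x)"]; simp)
        apply (clarsimp simp: Un_ac)
        done
    next
      assume "(i, j, k) = (2, 0, 1)"
      then have e: "i = 2" "j = 0" "k = 1" by simp_all
      show ?thesis unfolding e Pos_def Can_def
        apply (simp only: if_True if_False simp_thms numeral_eq_iff numeral_eq_one_iff one_eq_numeral_iff semiring_norm zero_neq_numeral numeral_neq_zero zero_neq_one one_neq_zero, rule key3[where h = "\<lambda>(x, y, z). (y, z, x)"])
         apply (rule bij3[where h' = "\<lambda>(x, y, z). (z, x, y)"]; simp)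
        apply (clarsimp simp: Un_ac)
        done
    next
      assume "(i, j, k) = (2, 1, 0)"
      then have e: "i = 2" "j = 1" "k = 0" by simp_all
      show ?thesis unfolding e Pos_def Can_def
        apply (simp only: if_True if_False simp_thms numeral_eq_iff numeral_eq_one_iff one_eq_numeral_iff semiring_norm zero_neq_numeral numeral_neq_zero zero_neq_one one_neq_zero, rule key3[where h = "\<lambda>(x, y, z). (z, y, x)"])
         apply (rule bij3[where h' = "\<lambda>(x, y, z). (z, y, x)"]; simp)
        apply (clarsimp simp: Un_ac)
        done
    qed
  qed
qed

end

lemma r3_pieces_len: "n < 3 \<Longrightarrow> length (r3_pieces a b c sa sb sc oT oM oB ! n) = 2"
  unfolding r3_pieces_def by (auto simp: less_Suc_eq numeral_3_eq_3)

lemma r3_pieces_lab: "n < 3 \<Longrightarrow> z \<in> set (r3_pieces a b c sa sb sc oT oM oB ! n) \<Longrightarrow> fst z \<in> {a, b, c}"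
  unfolding r3_pieces_def by (auto simp: less_Suc_eq numeral_3_eq_3 split: if_splits)

context bq begin

lemma Pos_eq: "{(x, y, z). x \<in> X \<and> y \<in> X \<and> z \<in> X \<and>
     CC ul ol (set (dec (P ! i) i0 [x, e0]) \<union> set (dec (P ! j) i1 [y, e1]) \<union> set (dec (P ! k) i2 [z, e2]))}
   = Pos P i j k i0 i1 i2 e0 e1 e2"
  unfolding Pos_def by auto

lemma r3_Phi:
  assumes xi: "xi \<in> X" and m: "r3_move w w'"
  shows "Phi X ul ol xi xj w = Phi X ul ol xi xj w'"
proof -
  from m obtain u0 u1 u2 u3 a b c sa sb sc oT oM oB i j k where
    d: "distinct [a, b, c]" and lab: "{a, b, c} \<inter> labels (u0 @ u1 @ u2 @ u3) = {}"
    and sg: "(oM = oT) = (sb = sc)" "(oB = oT) = (sa = sc)"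
    and ijk: "distinct [i, j, k]" "i < 3" "j < 3" "k < 3"
    and w: "w = u0 @ r3_pieces a b c sa sb sc oT oM oB ! i @ u1 @ r3_pieces a b c sa sb sc oT oM oB ! j @ u2 @ r3_pieces a b c sa sb sc oT oM oB ! k @ u3"
    and w': "w' = u0 @ r3_pieces a b c sa sb sc (\<not> oT) (\<not> oM) (\<not> oB) ! i @ u1 @ r3_pieces a b c sa sb sc (\<not> oT) (\<not> oM) (\<not> oB) ! j @ u2 @ r3_pieces a b c sa sb sc (\<not> oT) (\<not> oM) (\<not> oB) ! k @ u3"
    using m unfolding r3_move_def Let_def by (elim exE conjE) (rule that, assumption+)
  let ?P = "r3_pieces a b c sa sb sc oT oM oB"
  let ?Q = "r3_pieces a b c sa sb sc (\<not> oT) (\<not> oM) (\<not> oB)"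
  have labP: "fst z \<in> {a, b, c}" if "n < 3" "z \<in> set (r3_pieces a b c sa sb sc oT' oM' oB' ! n)" for n z oT' oM' oB'
    using r3_pieces_lab[OF that] .
  have dP: "\<forall>z \<in> set (?P ! i) \<union> set (?P ! j) \<union> set (?P ! k). fst z \<notin> labels (u0 @ u1 @ u2 @ u3)"
  proof
    fix z assume "z \<in> set (?P ! i) \<union> set (?P ! j) \<union> set (?P ! k)"
    then have "fst z \<in> {a, b, c}" using labP ijk by blast
    then show "fst z \<notin> labels (u0 @ u1 @ u2 @ u3)" using lab by blast
  qed
  have dQ: "\<forall>z \<in> set (?Q ! i) \<union> set (?Q ! j) \<union> set (?Q ! k). fst z \<notin> labels (u0 @ u1 @ u2 @ u3)"
  proof
    fix z assume "z \<in> set (?Q ! i) \<union> set (?Q ! j) \<union> set (?Q ! k)"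
    then have "fst z \<in> {a, b, c}" using labP ijk by blast
    then show "fst z \<notin> labels (u0 @ u1 @ u2 @ u3)" using lab by blast
  qed
  show ?thesis unfolding w w'
  proof (rule GEN[OF xi dP dQ])
    fix i0 i1 i2 e0 e1 e2 assume X: "i0 \<in> X" "i1 \<in> X" "i2 \<in> X" "e0 \<in> X" "e1 \<in> X" "e2 \<in> X"
    have "card (Fib (?P ! i) (?P ! j) (?P ! k) i0 i1 i2 e0 e1 e2) = card (Pos ?P i j k i0 i1 i2 e0 e1 e2)"
      using card_Fib222[OF r3_pieces_len r3_pieces_len r3_pieces_len X(4-6)] ijk Pos_eq by simp
    also have "\<dots> = card (Can ?P
     (if i = 0 then i0 else if j = 0 then i1 else i2) (if i = 0 then e0 else if j = 0 then e1 else e2)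
     (if i = 1 then i0 else if j = 1 then i1 else i2) (if i = 1 then e0 else if j = 1 then e1 else e2)
     (if i = 2 then i0 else if j = 2 then i1 else i2) (if i = 2 then e0 else if j = 2 then e1 else e2))"
      by (rule Pos_Can[OF ijk])
    also have "\<dots> = card (Can ?Q
     (if i = 0 then i0 else if j = 0 then i1 else i2) (if i = 0 then e0 else if j = 0 then e1 else e2)
     (if i = 1 then i0 else if j = 1 then i1 else i2) (if i = 1 then e0 else if j = 1 then e1 else e2)
     (if i = 2 then i0 else if j = 2 then i1 else i2) (if i = 2 then e0 else if j = 2 then e1 else e2))"
      by (rule Can_r3[OF d sg]) (use X in simp_all)
    also have "\<dots> = card (Pos ?Q i j k i0 i1 i2 e0 e1 e2)"
      by (rule Pos_Can[OF ijk, symmetric])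
    also have "\<dots> = card (Fib (?Q ! i) (?Q ! j) (?Q ! k) i0 i1 i2 e0 e1 e2)"
      using card_Fib222[OF r3_pieces_len r3_pieces_len r3_pieces_len X(4-6)] ijk Pos_eq by simp
    finally show "card (Fib (?P ! i) (?P ! j) (?P ! k) i0 i1 i2 e0 e1 e2) = card (Fib (?Q ! i) (?Q ! j) (?Q ! k) i0 i1 i2 e0 e1 e2)" .
  qed
qed

lemma r2_Phi:
  assumes xi: "xi \<in> X" and m: "r2_move w w'"
  shows "Phi X ul ol xi xj w = Phi X ul ol xi xj w'"
proof -
  from m obtain u1 u2 u3 a b s rv ovfirst where
    ab: "a \<noteq> b" "a \<notin> labels (u1 @ u2 @ u3)" "b \<notin> labels (u1 @ u2 @ u3)"
    and w: "w = u1 @ (if ovfirst then [(a, True, s), (b, True, \<not> s)] else (if rv then [(b, False, \<not> s), (a, False, s)] else [(a, False, s), (b, False, \<not> s)]))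
              @ u2 @ (if ovfirst then (if rv then [(b, False, \<not> s), (a, False, s)] else [(a, False, s), (b, False, \<not> s)]) else [(a, True, s), (b, True, \<not> s)]) @ u3"
    and w': "w' = u1 @ u2 @ u3"
    unfolding r2_move_def Let_def by blast
  define OP where "OP = [(a, True, s), (b, True, \<not> s)]"
  define UP where "UP = (if rv then [(b, False, \<not> s), (a, False, s)] else [(a, False, s), (b, False, \<not> s)])"
  define A0 where "A0 = (if ovfirst then OP else UP)"
  define A1 where "A1 = (if ovfirst then UP else OP)"
  have ww: "w = u1 @ A0 @ u2 @ A1 @ u3 @ [] @ []" unfolding w A0_def A1_def OP_def UP_def by simp
  have ww': "w' = u1 @ [] @ u2 @ [] @ u3 @ [] @ []" unfolding w' by simp
  have lOP: "length OP = 2" and lUP: "length UP = 2" unfolding OP_def UP_def by simp_all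
  have dA: "\<forall>z \<in> set A0 \<union> set A1 \<union> set []. fst z \<notin> labels (u1 @ u2 @ u3 @ [])"
    using ab unfolding A0_def A1_def OP_def UP_def by auto
  have dB: "\<forall>z \<in> set [] \<union> set [] \<union> set []. fst z \<notin> labels (u1 @ u2 @ u3 @ [])" by simp
  show ?thesis unfolding ww ww'
  proof (rule GEN[OF xi dA dB])
    fix i0 i1 i2 e0 e1 e2 assume X: "i0 \<in> X" "i1 \<in> X" "i2 \<in> X" "e0 \<in> X" "e1 \<in> X" "e2 \<in> X"
    have lA: "length A0 = 2" "length A1 = 2" unfolding A0_def A1_def using lOP lUP by simp_all
    have c: "card {(x, y). x \<in> X \<and> y \<in> X \<and> CC ul ol (set (dec A0 i0 [x, e0]) \<union> set (dec A1 i1 [y, e1]))}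
       = (if i0 = e0 \<and> i1 = e1 then 1 else 0)"
    proof (cases ovfirst)
      case True
      then show ?thesis unfolding A0_def A1_def OP_def using r2_fib[OF ab(1) X(1) X(4) X(2) X(5) UP_def] by simp
    next
      case False
      have "card {(x, y). x \<in> X \<and> y \<in> X \<and> CC ul ol (set (dec UP i0 [x, e0]) \<union> set (dec OP i1 [y, e1]))}
          = card {(x, y). x \<in> X \<and> y \<in> X \<and> CC ul ol (set (dec UP i0 [y, e0]) \<union> set (dec OP i1 [x, e1]))}"
        by (rule card_swap2)
      also have "\<dots> = card {(x, y). x \<in> X \<and> y \<in> X \<and> CC ul ol (set (dec OP i1 [x, e1]) \<union> set (dec UP i0 [y, e0]))}"
        by (simp add: Un_commute)
      also have "\<dots> = (if i1 = e1 \<and> i0 = e0 then 1 else 0)"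
        unfolding OP_def by (rule r2_fib[OF ab(1) X(2) X(5) X(1) X(4) UP_def])
      finally show ?thesis using False unfolding A0_def A1_def by auto
    qed
    show "card (Fib A0 A1 [] i0 i1 i2 e0 e1 e2) = card (Fib [] [] [] i0 i1 i2 e0 e1 e2)"
      unfolding card_Fib220[OF lA X(4,5)] card_Fib000 c by simp
  qed
qed

lemma r1_Phi:
  assumes xi: "xi \<in> X" and m: "r1_move w w'"
  shows "Phi X ul ol xi xj w = Phi X ul ol xi xj w'"
proof -
  from m obtain u v l ov s where w: "w = u @ [(l, ov, s), (l, \<not> ov, s)] @ v" and w': "w' = u @ v"
    and l: "l \<notin> labels (u @ v)"
    unfolding r1_move_def by blast
  have ww: "w = u @ [(l, ov, s), (l, \<not> ov, s)] @ v @ [] @ [] @ [] @ []" unfolding w by simp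
  have ww': "w' = u @ [] @ v @ [] @ [] @ [] @ []" unfolding w' by simp
  have dA: "\<forall>z \<in> set [(l, ov, s), (l, \<not> ov, s)] \<union> set [] \<union> set []. fst z \<notin> labels (u @ v @ [] @ [])"
    using l by auto
  have dB: "\<forall>z \<in> set [] \<union> set [] \<union> set []. fst z \<notin> labels (u @ v @ [] @ [])" by simp
  show ?thesis unfolding ww ww'
  proof (rule GEN[OF xi dA dB])
    fix i0 i1 i2 e0 e1 e2 assume X: "i0 \<in> X" "i1 \<in> X" "i2 \<in> X" "e0 \<in> X" "e1 \<in> X" "e2 \<in> X"
    show "card (Fib [(l, ov, s), (l, \<not> ov, s)] [] [] i0 i1 i2 e0 e1 e2) = card (Fib [] [] [] i0 i1 i2 e0 e1 e2)"
    proof -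
      have l2: "length [(l, ov, s), (l, \<not> ov, s)] = 2" by simp
      show ?thesis unfolding card_Fib200[OF l2 X(4)] card_Fib000 r1_fib[OF X(1) X(4)] by simp
    qed
  qed
qed

lemma relabel_Phi:
  assumes m: "relabel_move w w'"
  shows "Phi X ul ol xi xj w = Phi X ul ol xi xj w'"
proof -
  from m obtain f where f: "inj_on f (labels w)" and w': "w' = map (\<lambda>(l, ov, s). (f l, ov, s)) w"
    unfolding relabel_move_def by blast
  have len: "length w' = length w" unfolding w' by simp
  have key: "(\<exists>l. w' ! p = (l, True, s) \<and> w' ! q = (l, False, s)) \<longleftrightarrow> (\<exists>l. w ! p = (l, True, s) \<and> w ! q = (l, False, s))"
    if pq: "p < length w" "q < length w" for p q s
  proof
    assume "\<exists>l. w' ! p = (l, True, s) \<and> w' ! q = (l, False, s)"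
    then obtain l where l: "w' ! p = (l, True, s)" "w' ! q = (l, False, s)" by blast
    obtain lp op sp where wp: "w ! p = (lp, op, sp)" by (cases "w ! p")
    obtain lq oq sq where wq: "w ! q = (lq, oq, sq)" by (cases "w ! q")
    from l pq have e: "f lp = l" "op = True" "sp = s" "f lq = l" "oq = False" "sq = s"
      unfolding w' using wp wq by auto
    have "lp \<in> labels w" "lq \<in> labels w" unfolding labels_def using pq wp wq by (metis fst_conv image_eqI nth_mem)+
    with e f have "lp = lq" by (metis inj_onD)
    with e wp wq show "\<exists>l. w ! p = (l, True, s) \<and> w ! q = (l, False, s)" by auto
  next
    assume "\<exists>l. w ! p = (l, True, s) \<and> w ! q = (l, False, s)"
    then obtain l where "w ! p = (l, True, s)" "w ! q = (l, False, s)" by blast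
    then show "\<exists>l. w' ! p = (l, True, s) \<and> w' ! q = (l, False, s)" unfolding w' using pq by auto
  qed
  have "is_coloring X ul ol w cs \<longleftrightarrow> is_coloring X ul ol w' cs" for cs
  proof -
    have "(\<forall>p<length w. \<forall>q<length w. \<forall>l s. w ! p = (l, True, s) \<and> w ! q = (l, False, s) \<longrightarrow>
        crossing_ok ul ol s (cs ! p) (cs ! Suc p) (cs ! q) (cs ! Suc q)) \<longleftrightarrow>
       (\<forall>p<length w. \<forall>q<length w. \<forall>s. (\<exists>l. w ! p = (l, True, s) \<and> w ! q = (l, False, s)) \<longrightarrow>
        crossing_ok ul ol s (cs ! p) (cs ! Suc p) (cs ! q) (cs ! Suc q))" by blast
    also have "\<dots> \<longleftrightarrow> (\<forall>p<length w. \<forall>q<length w. \<forall>s. (\<exists>l. w' ! p = (l, True, s) \<and> w' ! q = (l, False, s)) \<longrightarrow>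
        crossing_ok ul ol s (cs ! p) (cs ! Suc p) (cs ! q) (cs ! Suc q))" using key by simp
    also have "\<dots> \<longleftrightarrow> (\<forall>p<length w'. \<forall>q<length w'. \<forall>l s. w' ! p = (l, True, s) \<and> w' ! q = (l, False, s) \<longrightarrow>
        crossing_ok ul ol s (cs ! p) (cs ! Suc p) (cs ! q) (cs ! Suc q))" unfolding len by blast
    finally show ?thesis unfolding is_coloring_def len by simp
  qed
  then show ?thesis unfolding Phi_def len by simp
qed

lemma step_Phi:
  assumes xi: "xi \<in> X" and s: "knotoid_step w w'"
  shows "Phi X ul ol xi xj w = Phi X ul ol xi xj w'"
  using s unfolding knotoid_step_def
  using r1_Phi[OF xi] r2_Phi[OF xi] r3_Phi[OF xi] relabel_Phi by metis

end

theorem mainTheorem2: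
  fixes X :: "'a set" and ul ol :: "'a \<Rightarrow> 'a \<Rightarrow> 'a"
    and K K' :: "letter list" and xi xj :: 'a
  assumes "finite X" and "biquandle X ul ol"
    and "gauss_diagram K" and "gauss_diagram K'"
    and "knotoid_equiv K K'"
    and "xi \<in> X" and "xj \<in> X"
  shows "Phi X ul ol xi xj K = Phi X ul ol xi xj K'"
proof -
  interpret bq X ul ol using assms(1,2) by unfold_locales
  from assms(5) show ?thesis unfolding knotoid_equiv_def
  proof (induction rule: rtranclp_induct)
    case base
    then show ?case by simp
  next
    case (step y z)
    then show ?case using step_Phi[OF assms(6), of y z] by simp
  qed
qed

end
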